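(* Let $k,\ell\in\mathbb N$ with $\ell\le k$, $G\in\mathscr S^{(k)}$, $H\in\mathscr S^{(\ell)}$, $\sigma\in\{-1,0,1\}$ and $\vartheta\in\Theta$. Then for all $N\in\mathbb N$, $$E_{\mu_\vartheta}\big[\langle G,\mathscr X^{(k)N}\rangle\big]\,E_{\mu_\vartheta}\big[\langle H,\mathscr X^{(\ell)N}\rangle\big]=\sum_{h=0}^\ell\frac{\vartheta^h(-\sigma)^h}{N^{hd}}\,E_{\mu_\vartheta}\big[\langle\{G\otimes H\}^{(k+\ell-h)},\mathscr X^{(k+\ell-h)N}\rangle\big],$$ where $\langle\{G\otimes H\}^{(k+\ell-h)},\mathscr X^{(k+\ell-h)N}\rangle:=N^{-(k+\ell-h)d}\sum_{\mathbf x\in(\mathbb Z^d)^k}\sum_{\mathbf y\in(\mathbb Z^d)^\ell}G(\tfrac{\mathbf x}{N})H(\tfrac{\mathbf y}{N})\{\eta|(\mathbf x,\mathbf y)\}^{(k+\ell-h)}$.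
   Context: $\alpha\in\mathbb N$, $\sigma\in\{-1,0,1\}$, $\Theta=[0,1]$ if $\sigma=-1$, $[0,\infty)$ otherwise. $\mu_\vartheta$ is the product measure on $\mathbb N_0^{\mathbb Z^d}$ with marginals $\mathrm{Bin}(\alpha,\vartheta)$ ($\sigma=-1$), $\mathrm{Poisson}(\alpha\vartheta)$ ($\sigma=0$), negative binomial with shape $\alpha$, mean $\alpha\vartheta$, variance $\alpha\vartheta(1+\vartheta)$ ($\sigma=1$); it satisfies $E_{\mu_\vartheta}[[\eta]_{\mathbf x}]=\vartheta^k\pi(\mathbf x)$, $\mathbf x\in(\mathbb Z^d)^k$, with $\pi(\mathbf x):=\alpha(\alpha+\sigma\mathbf 1_{\{x_2=x_1\}})\cdots(\alpha+\sigma\sum_{j<k}\mathbf 1_{\{x_k=x_j\}})$ and $[\eta]_{\mathbf x}:=\eta(x_1)(\eta(x_2)-\mathbf 1_{\{x_2=x_1\}})\cdots(\eta(x_k)-\sum_{j<k}\mathbf 1_{\{x_k=x_j\}})$. $\mathscr S^{(k)}:=\mathscr S(\mathbb R^{kd})$; $\langle G,\mathscr X^{(k)N}\rangle:=N^{-kd}\sum_{\mathbf x}G(\mathbf x/N)[\eta]_{\mathbf x}$. For $\mathbf y=(y_1,\dots,y_\ell)$: $\{\eta|(\mathbf x,\mathbf y)\}^{(k+\ell-h)}:=\sum_{\mathcal J\subseteq\{1..\ell\},|\mathcal J|=h}[\eta]_{\mathbf x\,\widehat{\mathbf y}_{\mathcal J}}\sum_{i:\mathcal J\to\{1..k\}\text{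 one-to-one}}\prod_{j\in\mathcal J}\mathbf 1_{\{y_j=x_{i_j}\}}$, with $\mathbf x\,\widehat{\mathbf y}_{\mathcal J}$ the concatenation of $\mathbf x$ with $\mathbf y$ after deleting the entries indexed by $\mathcal J$. *)

theory Defs
  imports "HOL-Probability.Probability"
begin

text \<open>Sites of the lattice Z^d are elements of int^'d, 'd a finite index type with d = CARD('d).
  A point of (Z^d)^k (resp. R^(kd)) is a list of length k of such vectors.\<close>

definition scale_site :: "nat \<Rightarrow> int ^ 'd \<Rightarrow> real ^ 'd" where
  "scale_site N x = (\<chi> i. real_of_int (x $ i) / real N)"

text \<open>Partial derivative of F in the coordinate (j,i) (j-th point, i-th component),
  required to exist at every point of (R^d)^k.\<close>
definition has_partial ::
  "nat \<Rightarrow> nat \<Rightarrow> 'd::finite \<Rightarrow> ((real ^ 'd) list \<Rightarrow> real) \<Rightarrow> ((real ^ 'd) list \<Rightarrow> real) \<Rightarrow> bool" where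
  "has_partial k j i F F' \<longleftrightarrow>
     (\<forall>xs. length xs = k \<longrightarrow>
        ((\<lambda>t. F (xs[j := xs ! j + t *\<^sub>R axis i 1])) has_real_derivative F' xs) (at 0))"

inductive iter_partial ::
  "nat \<Rightarrow> ((real ^ 'd::finite) list \<Rightarrow> real) \<Rightarrow> ((real ^ 'd) list \<Rightarrow> real) \<Rightarrow> bool"
  for k F where
  base: "iter_partial k F F"
| step: "iter_partial k F D \<Longrightarrow> j < k \<Longrightarrow> has_partial k j i D D' \<Longrightarrow> iter_partial k F D'"

definition list_norm :: "(real ^ 'd) list \<Rightarrow> real" where
  "list_norm xs = sqrt (\<Sum>j<length xs. (norm (xs ! j))\<^sup>2)"

definition schwartz :: "nat \<Rightarrow> ((real ^ 'd::finite) list \<Rightarrow> real) \<Rightarrow> bool" where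
  "schwartz k F \<longleftrightarrow>
     (\<forall>D. iter_partial k F D \<longrightarrow>
        (\<forall>j<k. \<forall>i. \<exists>D'. has_partial k j i D D') \<and>
        (\<forall>xs. length xs = k \<longrightarrow>
           (\<forall>xn. (\<forall>n. length (xn n) = k) \<longrightarrow> (\<forall>j<k. (\<lambda>n. xn n ! j) \<longlonglongrightarrow> xs ! j)
                  \<longrightarrow> (\<lambda>n. D (xn n)) \<longlonglongrightarrow> D xs)) \<and>
        (\<forall>m::nat. \<exists>C. \<forall>xs. length xs = k \<longrightarrow> (1 + list_norm xs) ^ m * \<bar>D xs\<bar> \<le> C))"

text \<open>[eta]_x = eta(x_1)(eta(x_2) - 1{x_2=x_1}) ... (eta(x_k) - sum_{j<k} 1{x_k=x_j}).\<close>
definition fmom :: "(int ^ 'd \<Rightarrow> nat) \<Rightarrow> (int ^ 'd) list \<Rightarrow> real" where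
  "fmom \<eta> xs = (\<Prod>m<length xs.
      real (\<eta> (xs ! m)) - real (card {j. j < m \<and> xs ! j = xs ! m}))"

text \<open>Marginal law: Bin(alpha,theta) (sigma=-1), Poisson(alpha theta) (sigma=0),
  negative binomial with shape alpha and mean alpha theta (sigma=1), i.e. the number of failures
  before the alpha-th success with success probability 1/(1+theta).\<close>
definition marg :: "int \<Rightarrow> nat \<Rightarrow> real \<Rightarrow> nat pmf" where
  "marg \<sigma> \<alpha> \<theta> =
     (if \<sigma> = -1 then binomial_pmf \<alpha> \<theta>
      else if \<sigma> = 0 then (if \<theta> = 0 then return_pmf 0 else poisson_pmf (real \<alpha> * \<theta>))
      else neg_binomial_pmf \<alpha> (1 / (1 + \<theta>)))"

definition mu :: "int \<Rightarrow> nat \<Rightarrow> real \<Rightarrow> (int ^ 'd \<Rightarrow> nat) measure" where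
  "mu \<sigma> \<alpha> \<theta> = PiM UNIV (\<lambda>_. measure_pmf (marg \<sigma> \<alpha> \<theta>))"

definition Theta :: "int \<Rightarrow> real set" where
  "Theta \<sigma> = (if \<sigma> = -1 then {0..1} else {0..})"

definition pairing :: "nat \<Rightarrow> ((real ^ 'd::finite) list \<Rightarrow> real) \<Rightarrow> nat \<Rightarrow> (int ^ 'd \<Rightarrow> nat) \<Rightarrow> real" where
  "pairing k G N \<eta> = (1 / real N ^ (k * CARD('d))) *
     (\<Sum>\<^sub>\<infinity>xs \<in> {xs. length xs = k}. G (map (scale_site N) xs) * fmom \<eta> xs)"

definition curly :: "nat \<Rightarrow> (int ^ 'd \<Rightarrow> nat) \<Rightarrow> (int ^ 'd) list \<Rightarrow> (int ^ 'd) list \<Rightarrow> real" where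
  "curly h \<eta> xs ys =
     (\<Sum>J | J \<subseteq> {0..<length ys} \<and> card J = h.
        fmom \<eta> (xs @ nths ys ({0..<length ys} - J)) *
        (\<Sum>i | i \<in> J \<rightarrow>\<^sub>E {0..<length xs} \<and> inj_on i J.
           \<Prod>j\<in>J. if ys ! j = xs ! (i j) then 1 else 0))"

definition pairing_tensor ::
  "nat \<Rightarrow> nat \<Rightarrow> nat \<Rightarrow> ((real ^ 'd::finite) list \<Rightarrow> real) \<Rightarrow> ((real ^ 'd) list \<Rightarrow> real)
    \<Rightarrow> nat \<Rightarrow> (int ^ 'd \<Rightarrow> nat) \<Rightarrow> real" where
  "pairing_tensor k l h G H N \<eta> = (1 / real N ^ ((k + l - h) * CARD('d))) *
     (\<Sum>\<^sub>\<infinity>xs \<in> {xs. length xs = k}. \<Sum>\<^sub>\<infinity>ys \<in> {ys. length ys = l}.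
        G (map (scale_site N) xs) * H (map (scale_site N) ys) * curly h \<eta> xs ys)"

end

theory Submission
  imports Defs
begin


lemma infsum_real_eq_integral:
  fixes f :: "'a \<Rightarrow> real"
  shows "infsum f A = integral\<^sup>L (count_space A) f"
proof (cases "Infinite_Set_Sum.abs_summable_on f A")
  case True
  then show ?thesis using infsetsum_infsum[OF True] by (simp add: infsetsum_def)
next
  case False
  then have "\<not> integrable (count_space A) f" by (simp add: abs_summable_on_def)
  then have 1: "integral\<^sup>L (count_space A) f = 0" by (rule not_integrable_integral_eq)
  have "\<not> f summable_on A"
    using False summable_on_iff_abs_summable_on_real abs_summable_equivalent by blast
  then have "infsum f A = 0" by (simp add: infsum_not_exists)
  with 1 show ?thesis by simp
qed

lemma integral_infsum_swap:
  fixes f :: "'a \<Rightarrow> 'b \<Rightarrow> real"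
  assumes M: "prob_space M"
  and A: "countable A"
  and int: "\<And>a. a \<in> A \<Longrightarrow> integrable M (f a)"
  and summ: "integrable (count_space A) (\<lambda>a. \<integral>x. \<bar>f a x\<bar> \<partial>M)"
  shows "integrable M (\<lambda>x. infsum (\<lambda>a. f a x) A)"
    and "(\<integral>x. infsum (\<lambda>a. f a x) A \<partial>M) = infsum (\<lambda>a. \<integral>x. f a x \<partial>M) A"
proof -
  interpret M: prob_space M by (rule M)
  interpret C: sigma_finite_measure "count_space A"
    by (rule sigma_finite_measure_count_space_countable[OF A])
  interpret P: pair_sigma_finite "count_space A" M ..
  have meas: "(\<lambda>(a, x). f a x) \<in> borel_measurable (count_space A \<Otimes>\<^sub>M M)"
    by (rule measurable_pair_measure_countable1[OF A]) (use int in auto)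
  have I: "integrable (count_space A \<Otimes>\<^sub>M M) (\<lambda>(a, x). f a x)"
  proof (rule P.Fubini_integrable[OF meas])
    show "integrable (count_space A) (\<lambda>a. \<integral>y. norm (case (a, y) of (a, x) \<Rightarrow> f a x) \<partial>M)"
      using summ by simp
    show "AE a in count_space A. integrable M (\<lambda>y. case (a, y) of (a, x) \<Rightarrow> f a x)"
      using int by (simp add: AE_count_space)
  qed
  have eq: "(\<lambda>x. infsum (\<lambda>a. f a x) A) = (\<lambda>x. \<integral>a. f a x \<partial>count_space A)"
    by (simp add: infsum_real_eq_integral)
  show "integrable M (\<lambda>x. infsum (\<lambda>a. f a x) A)"
    unfolding eq using P.integrable_snd[OF I] .
  have "(\<integral>x. infsum (\<lambda>a. f a x) A \<partial>M) = integral\<^sup>L (count_space A \<Otimes>\<^sub>M M) (\<lambda>(a, x). f a x)"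
    unfolding eq using P.integral_snd[OF I] .
  also have "\<dots> = (\<integral>a. (\<integral>x. f a x \<partial>M) \<partial>count_space A)"
    using P.integral_fst[OF I] by simp
  also have "\<dots> = infsum (\<lambda>a. \<integral>x. f a x \<partial>M) A"
    by (simp add: infsum_real_eq_integral)
  finally show "(\<integral>x. infsum (\<lambda>a. f a x) A \<partial>M) = infsum (\<lambda>a. \<integral>x. f a x \<partial>M) A" .
qed



definition cntl :: "'a list \<Rightarrow> 'a \<Rightarrow> nat" where
  "cntl R w = card {j. j < length R \<and> R ! j = w}"

definition pprod :: "('a \<Rightarrow> nat \<Rightarrow> real) \<Rightarrow> 'a list \<Rightarrow> real" where
  "pprod F xs = (\<Prod>m<length xs. F (xs ! m) (card {j. j < m \<and> xs ! j = xs ! m}))"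

fun gg :: "('a \<Rightarrow> nat \<Rightarrow> real) \<Rightarrow> ('a \<Rightarrow> nat) \<Rightarrow> 'a list \<Rightarrow> real" where
  "gg F c [] = 1"
| "gg F c (w # ys) = F w (c w) * gg F (c(w := Suc (c w))) ys"

lemma pprod_Nil[simp]: "pprod F [] = 1" by (simp add: pprod_def)

lemma pprod_snoc: "pprod F (xs @ [w]) = pprod F xs * F w (cntl xs w)"
proof -
  have "pprod F (xs @ [w]) = (\<Prod>m<Suc (length xs). F ((xs@[w]) ! m) (card {j. j < m \<and> (xs@[w]) ! j = (xs@[w]) ! m}))"
    by (simp add: pprod_def)
  also have "\<dots> = (\<Prod>m<length xs. F ((xs@[w]) ! m) (card {j. j < m \<and> (xs@[w]) ! j = (xs@[w]) ! m})) * F ((xs@[w]) ! length xs) (card {j. j < length xs \<and> (xs@[w]) ! j = (xs@[w]) ! length xs})"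
    by (simp only: prod.lessThan_Suc)
  also have "{j. j < length xs \<and> (xs@[w]) ! j = (xs@[w]) ! length xs} = {j. j < length xs \<and> xs ! j = w}"
    by (auto simp: nth_append)
  also have "(xs@[w]) ! length xs = w" by simp
  also have "(\<Prod>m<length xs. F ((xs@[w]) ! m) (card {j. j < m \<and> (xs@[w]) ! j = (xs@[w]) ! m})) = pprod F xs"
    unfolding pprod_def
  proof (rule prod.cong[OF refl])
    fix m assume "m \<in> {..<length xs}"
    then have m: "m < length xs" by simp
    have "{j. j < m \<and> (xs@[w]) ! j = (xs@[w]) ! m} = {j. j < m \<and> xs ! j = xs ! m}"
      using m by (auto simp: nth_append)
    then show "F ((xs@[w]) ! m) (card {j. j < m \<and> (xs@[w]) ! j = (xs@[w]) ! m}) = F (xs ! m) (card {j. j < m \<and> xs ! j = xs ! m})"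
      using m by (simp add: nth_append)
  qed
  finally show ?thesis by (simp add: cntl_def)
qed

lemma cntl_snoc: "cntl (R @ [w]) = (cntl R)(w := Suc (cntl R w))"
proof
  fix v
  have "{j. j < length (R@[w]) \<and> (R@[w]) ! j = v} = {j. j < length R \<and> R ! j = v} \<union> (if v = w then {length R} else {})"
    by (auto simp: nth_append less_Suc_eq)
  then show "cntl (R @ [w]) v = ((cntl R)(w := Suc (cntl R w))) v"
    by (auto simp: cntl_def)
qed

lemma cntl_Nil[simp]: "cntl [] = (\<lambda>_. 0)" by (simp add: cntl_def fun_eq_iff)

lemma pprod_append: "pprod F (R @ ys) = pprod F R * gg F (cntl R) ys"
proof (induction ys arbitrary: R)
  case Nil then show ?case by simp
next
  case (Cons w ys)
  have "pprod F (R @ w # ys) = pprod F ((R @ [w]) @ ys)" by simp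
  also have "\<dots> = pprod F (R @ [w]) * gg F (cntl (R @ [w])) ys" by (rule Cons.IH)
  also have "\<dots> = pprod F R * gg F (cntl R) (w # ys)"
    by (simp add: pprod_snoc cntl_snoc)
  finally show ?case .
qed

lemma pprod_gg: "pprod F ys = gg F (\<lambda>_. 0) ys"
  using pprod_append[of F "[]" ys] by simp

lemma cntl_append: "cntl (X @ R) w = cntl X w + cntl R w"
proof -
  have "{j. j < length (X@R) \<and> (X@R) ! j = w} = {j. j < length X \<and> X ! j = w} \<union> (\<lambda>j. j + length X) ` {j. j < length R \<and> R ! j = w}"
  proof (rule set_eqI, rule iffI)
    fix x assume x: "x \<in> {j. j < length (X@R) \<and> (X@R) ! j = w}"
    show "x \<in> {j. j < length X \<and> X ! j = w} \<union> (\<lambda>j. j + length X) ` {j. j < length R \<and> R ! j = w}"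
    proof (cases "x < length X")
      case True then show ?thesis using x by (auto simp: nth_append)
    next
      case False
      then have "x = (x - length X) + length X" by simp
      moreover have "x - length X \<in> {j. j < length R \<and> R ! j = w}" using x False by (auto simp: nth_append)
      ultimately show ?thesis by blast
    qed
  qed (auto simp: nth_append)
  moreover have "card ((\<lambda>j. j + length X) ` {j. j < length R \<and> R ! j = w}) = card {j. j < length R \<and> R ! j = w}"
    by (rule card_image) (auto simp: inj_on_def)
  moreover have "{j. j < length X \<and> X ! j = w} \<inter> (\<lambda>j. j + length X) ` {j. j < length R \<and> R ! j = w} = {}"
    by auto
  ultimately show ?thesis unfolding cntl_def by (simp add: card_Un_disjoint)
qed



definition NA :: "'a list \<Rightarrow> nat set \<Rightarrow> nat set \<Rightarrow> 'a list \<Rightarrow> real" where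
  "NA X A J ys = (\<Sum>i | i \<in> J \<rightarrow>\<^sub>E A \<and> inj_on i J. \<Prod>j\<in>J. if ys ! j = X ! (i j) then 1 else 0)"

lemma NA_shift:
  assumes "finite J"
  shows "NA X A (Suc ` J) (w # ys) = NA X A J ys"
  unfolding NA_def
proof (rule sum.reindex_bij_witness[where j = "\<lambda>i j. if j \<in> J then i (Suc j) else undefined"
      and i = "\<lambda>i j. if j \<in> Suc ` J then i (j - 1) else undefined"])
  fix i assume i: "i \<in> {i. i \<in> Suc ` J \<rightarrow>\<^sub>E A \<and> inj_on i (Suc ` J)}"
  show "(\<lambda>j. if j \<in> Suc ` J then (if j - 1 \<in> J then i (Suc (j - 1)) else undefined) else undefined) = i"
    using i by (auto simp: fun_eq_iff PiE_def extensional_def)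
  have "(\<lambda>j. if j \<in> J then i (Suc j) else undefined) \<in> J \<rightarrow>\<^sub>E A"
    using i by (auto simp: PiE_def extensional_def)
  moreover have "inj_on (\<lambda>j. if j \<in> J then i (Suc j) else undefined) J"
    using i by (auto simp: inj_on_def)
  ultimately show "(\<lambda>j. if j \<in> J then i (Suc j) else undefined) \<in> {i. i \<in> J \<rightarrow>\<^sub>E A \<and> inj_on i J}"
    by simp
  show "(\<Prod>j\<in>J. if ys ! j = X ! ((\<lambda>j. if j \<in> J then i (Suc j) else undefined) j) then 1 else 0)
      = (\<Prod>j\<in>Suc ` J. if (w # ys) ! j = X ! (i j) then 1 else 0)"
    by (simp add: prod.reindex)
next
  fix i assume i: "i \<in> {i. i \<in> J \<rightarrow>\<^sub>E A \<and> inj_on i J}"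
  show "(\<lambda>j. if j \<in> J then (if Suc j \<in> Suc ` J then i (Suc j - 1) else undefined) else undefined) = i"
    using i by (auto simp: fun_eq_iff PiE_def extensional_def)
  have "(\<lambda>j. if j \<in> Suc ` J then i (j - 1) else undefined) \<in> Suc ` J \<rightarrow>\<^sub>E A"
    using i by (auto simp: PiE_def extensional_def)
  moreover have "inj_on (\<lambda>j. if j \<in> Suc ` J then i (j - 1) else undefined) (Suc ` J)"
    using i by (auto simp: inj_on_def)
  ultimately show "(\<lambda>j. if j \<in> Suc ` J then i (j - 1) else undefined) \<in> {i. i \<in> Suc ` J \<rightarrow>\<^sub>E A \<and> inj_on i (Suc ` J)}"
    by simp
qed

lemma NA_cons0:
  assumes J: "finite J" and A: "finite A"
  shows "NA X A (insert 0 (Suc ` J)) (w # ys) = (\<Sum>p\<in>A. (if w = X ! p then 1 else 0) * NA X (A - {p}) J ys)"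
proof -
  let ?S2 = "\<lambda>p. {i. i \<in> J \<rightarrow>\<^sub>E (A - {p}) \<and> inj_on i J}"
  let ?f = "\<lambda>(p, i). (if w = X ! p then 1 else 0) * (\<Prod>j\<in>J. if ys ! j = X ! (i j) then 1 else (0::real))"
  have fin: "finite (?S2 p)" for p
    by (rule finite_subset[of _ "J \<rightarrow>\<^sub>E (A - {p})"]) (use J A in \<open>auto intro!: finite_PiE\<close>)
  have "(\<Sum>p\<in>A. (if w = X ! p then 1 else 0) * NA X (A - {p}) J ys) = (\<Sum>p\<in>A. \<Sum>i\<in>?S2 p. ?f (p, i))"
    by (simp add: NA_def sum_distrib_left)
  also have "\<dots> = (\<Sum>z\<in>Sigma A ?S2. ?f z)"
    using sum.Sigma[OF A, of ?S2 "\<lambda>p i. ?f (p, i)"] fin by simp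
  also have "\<dots> = NA X A (insert 0 (Suc ` J)) (w # ys)"
    unfolding NA_def
  proof (rule sym)
    show "(\<Sum>i | i \<in> insert 0 (Suc ` J) \<rightarrow>\<^sub>E A \<and> inj_on i (insert 0 (Suc ` J)).
        \<Prod>j\<in>insert 0 (Suc ` J). if (w # ys) ! j = X ! (i j) then 1 else 0) = (\<Sum>z\<in>Sigma A ?S2. ?f z)"
  proof (rule sum.reindex_bij_witness[where j = "\<lambda>i. (i 0, \<lambda>j. if j \<in> J then i (Suc j) else undefined)"
      and i = "\<lambda>(p, i) j. if j = 0 then p else if j \<in> Suc ` J then i (j - 1) else undefined"])
    fix i assume i: "i \<in> {i. i \<in> insert 0 (Suc ` J) \<rightarrow>\<^sub>E A \<and> inj_on i (insert 0 (Suc ` J))}"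
    show "(case (i 0, \<lambda>j. if j \<in> J then i (Suc j) else undefined) of
           (p, i) \<Rightarrow> \<lambda>j. if j = 0 then p else if j \<in> Suc ` J then i (j - 1) else undefined) = i"
      using i by (auto simp: fun_eq_iff PiE_def extensional_def)
    have i0: "i 0 \<in> A" using i by auto
    have "(\<lambda>j. if j \<in> J then i (Suc j) else undefined) \<in> J \<rightarrow>\<^sub>E (A - {i 0})"
    proof -
      have "i (Suc j) \<noteq> i 0" if "j \<in> J" for j
        using i that unfolding inj_on_def by blast
      then show ?thesis using i by (auto simp: PiE_def extensional_def)
    qed
    moreover have "inj_on (\<lambda>j. if j \<in> J then i (Suc j) else undefined) J"
      using i by (auto simp: inj_on_def)
    ultimately show "(i 0, \<lambda>j. if j \<in> J then i (Suc j) else undefined) \<in> Sigma A ?S2"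
      using i0 by simp
    have "(\<Prod>j\<in>insert 0 (Suc ` J). if (w # ys) ! j = X ! (i j) then 1 else (0::real))
        = (if w = X ! (i 0) then 1 else 0) * (\<Prod>j\<in>Suc ` J. if (w # ys) ! j = X ! (i j) then 1 else (0::real))"
      using J by (subst prod.insert) auto
    also have "(\<Prod>j\<in>Suc ` J. if (w # ys) ! j = X ! (i j) then 1 else (0::real))
        = (\<Prod>j\<in>J. if ys ! j = X ! (i (Suc j)) then 1 else (0::real))"
      by (simp add: prod.reindex)
    finally show "?f (i 0, \<lambda>j. if j \<in> J then i (Suc j) else undefined) =
        (\<Prod>j\<in>insert 0 (Suc ` J). if (w # ys) ! j = X ! (i j) then 1 else 0)"
      by simp
  next
    fix z assume z: "z \<in> Sigma A ?S2"
    let ?I = "\<lambda>(p, i) j. if j = 0 then p else if j \<in> Suc ` J then i (j - 1) else undefined"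
    show "((?I z) 0, \<lambda>j. if j \<in> J then (?I z) (Suc j) else undefined) = z"
    proof -
      obtain p i where zpi: "z = (p, i)" by (cases z)
      with z have i: "i \<in> J \<rightarrow>\<^sub>E (A - {p})" by auto
      then show ?thesis using zpi by (auto simp: fun_eq_iff PiE_def extensional_def)
    qed
    show "?I z \<in> {i. i \<in> insert 0 (Suc ` J) \<rightarrow>\<^sub>E A \<and> inj_on i (insert 0 (Suc ` J))}"
    proof -
      obtain p i where zpi: "z = (p, i)" by (cases z)
      with z have p: "p \<in> A" and i: "i \<in> J \<rightarrow>\<^sub>E (A - {p})" "inj_on i J" by auto
      let ?i = "\<lambda>j. if j = 0 then p else if j \<in> Suc ` J then i (j - 1) else undefined"
      have "?i \<in> insert 0 (Suc ` J) \<rightarrow>\<^sub>E A"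
        using i p by (auto simp: PiE_def extensional_def)
      moreover have "inj_on ?i (insert 0 (Suc ` J))"
        using i unfolding inj_on_def by (auto simp: PiE_def)
      ultimately show ?thesis using zpi by simp
    qed
  qed
  qed
  finally show ?thesis ..
qed



definition Fm :: "int \<Rightarrow> nat \<Rightarrow> real \<Rightarrow> 'a \<Rightarrow> nat \<Rightarrow> real" where
  "Fm \<sigma> \<alpha> \<theta> = (\<lambda>z c. \<theta> * (real \<alpha> + of_int \<sigma> * real c))"

definition Psi :: "int \<Rightarrow> nat \<Rightarrow> real \<Rightarrow> 'a list \<Rightarrow> nat set \<Rightarrow> 'a list \<Rightarrow> 'a list \<Rightarrow> real" where
  "Psi \<sigma> \<alpha> \<theta> X A R ys = (\<Sum>J \<in> Pow {..<length ys}. (- of_int \<sigma> * \<theta>) ^ card J *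
      pprod (Fm \<sigma> \<alpha> \<theta>) (X @ R @ nths ys ({..<length ys} - J)) * NA X A J ys)"

definition cntA :: "'a list \<Rightarrow> nat set \<Rightarrow> 'a list \<Rightarrow> 'a \<Rightarrow> nat" where
  "cntA X A R w = cntl R w + card {p \<in> {..<length X} - A. X ! p = w}"

lemma sum_Pow_Suc:
  fixes g :: "nat set \<Rightarrow> real"
  shows "(\<Sum>J \<in> Pow {..<Suc n}. g J) = (\<Sum>J \<in> Pow {..<n}. g (Suc ` J)) + (\<Sum>J \<in> Pow {..<n}. g (insert 0 (Suc ` J)))"
proof -
  let ?B = "Suc ` {..<n}"
  have B: "{..<Suc n} = insert 0 ?B" by (rule lessThan_Suc_eq_insert_0)
  have 0: "0 \<notin> ?B" by auto
  have "(\<Sum>J \<in> Pow {..<Suc n}. g J) = (\<Sum>J \<in> Pow ?B \<union> insert 0 ` Pow ?B. g J)"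
    unfolding B Pow_insert ..
  also have "\<dots> = (\<Sum>J \<in> Pow ?B. g J) + (\<Sum>J \<in> insert 0 ` Pow ?B. g J)"
    by (rule sum.union_disjoint) (use 0 in auto)
  also have "(\<Sum>J \<in> insert 0 ` Pow ?B. g J) = (\<Sum>J \<in> Pow ?B. g (insert 0 J))"
  proof (rule sum.reindex_cong[OF _ refl refl])
    show "inj_on (insert 0) (Pow ?B)"
      unfolding inj_on_def using 0 by (metis Pow_iff in_mono insert_ident)
  qed
  also have "Pow ?B = image Suc ` Pow {..<n}" by (rule image_Pow_surj[symmetric]) simp
  also have "(\<Sum>J \<in> image Suc ` Pow {..<n}. g J) = (\<Sum>J \<in> Pow {..<n}. g (Suc ` J))"
    by (rule sum.reindex_cong[OF inj_on_image_Pow refl refl]) simp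
  also have "(\<Sum>J \<in> image Suc ` Pow {..<n}. g (insert 0 J)) = (\<Sum>J \<in> Pow {..<n}. g (insert 0 (Suc ` J)))"
    by (rule sum.reindex_cong[OF inj_on_image_Pow refl refl]) simp
  finally show ?thesis .
qed

lemma Psi_Cons:
  assumes A: "A \<subseteq> {..<length X}"
  shows "Psi \<sigma> \<alpha> \<theta> X A R (w # ys) = Psi \<sigma> \<alpha> \<theta> X A (R @ [w]) ys +
     (- of_int \<sigma> * \<theta>) * (\<Sum>p\<in>A. (if w = X ! p then 1 else 0) * Psi \<sigma> \<alpha> \<theta> X (A - {p}) R ys)"
proof -
  let ?t = "- of_int \<sigma> * \<theta> :: real"
  let ?F = "Fm \<sigma> \<alpha> \<theta>"
  let ?n = "length ys"
  have finA: "finite A" using A finite_subset by blast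
  let ?g = "\<lambda>J. ?t ^ card J * pprod ?F (X @ R @ nths (w # ys) ({..<Suc ?n} - J)) * NA X A J (w # ys)"
  have "Psi \<sigma> \<alpha> \<theta> X A R (w # ys) = (\<Sum>J \<in> Pow {..<Suc ?n}. ?g J)"
    by (simp add: Psi_def)
  also have "\<dots> = (\<Sum>J \<in> Pow {..<?n}. ?g (Suc ` J)) + (\<Sum>J \<in> Pow {..<?n}. ?g (insert 0 (Suc ` J)))"
    by (rule sum_Pow_Suc)
  also have "(\<Sum>J \<in> Pow {..<?n}. ?g (Suc ` J)) = Psi \<sigma> \<alpha> \<theta> X A (R @ [w]) ys"
    unfolding Psi_def
  proof (rule sum.cong[OF refl])
    fix J assume J: "J \<in> Pow {..<?n}"
    then have fJ: "finite J" using finite_subset by blast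
    have c: "card (Suc ` J) = card J" by (simp add: card_image)
    have "{j. Suc j \<in> {..<Suc ?n} - Suc ` J} = {..<?n} - J" by auto
    then have nt: "nths (w # ys) ({..<Suc ?n} - Suc ` J) = w # nths ys ({..<?n} - J)"
      by (simp add: nths_Cons)
    show "?g (Suc ` J) = ?t ^ card J * pprod ?F (X @ (R @ [w]) @ nths ys ({..<?n} - J)) * NA X A J ys"
      by (simp only: c nt NA_shift[OF fJ] append_assoc append_Cons append_Nil)
  qed
  also have "(\<Sum>J \<in> Pow {..<?n}. ?g (insert 0 (Suc ` J))) =
      (\<Sum>J \<in> Pow {..<?n}. \<Sum>p\<in>A. ?t * ((if w = X ! p then 1 else 0) *
         (?t ^ card J * pprod ?F (X @ R @ nths ys ({..<?n} - J)) * NA X (A - {p}) J ys)))"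
  proof (rule sum.cong[OF refl])
    fix J assume J: "J \<in> Pow {..<?n}"
    then have fJ: "finite J" using finite_subset by blast
    have c: "card (insert 0 (Suc ` J)) = Suc (card J)"
      using fJ by (simp add: card_image)
    have "{j. Suc j \<in> {..<Suc ?n} - insert 0 (Suc ` J)} = {..<?n} - J" by auto
    then have nt: "nths (w # ys) ({..<Suc ?n} - insert 0 (Suc ` J)) = nths ys ({..<?n} - J)"
      by (simp add: nths_Cons)
    show "?g (insert 0 (Suc ` J)) = (\<Sum>p\<in>A. ?t * ((if w = X ! p then 1 else 0) *
         (?t ^ card J * pprod ?F (X @ R @ nths ys ({..<?n} - J)) * NA X (A - {p}) J ys)))"
      using c nt NA_cons0[OF fJ finA, of X w ys]
      by (simp add: sum_distrib_left sum_distrib_right mult_ac sum_negf)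
  qed
  also have "\<dots> = ?t * (\<Sum>p\<in>A. (if w = X ! p then 1 else 0) * Psi \<sigma> \<alpha> \<theta> X (A - {p}) R ys)"
    unfolding Psi_def by (subst sum.swap) (simp add: sum_distrib_left)
  finally show ?thesis .
qed

lemma NA_empty: "NA X A {} [] = 1"
proof -
  have "{i. i \<in> {} \<rightarrow>\<^sub>E A \<and> inj_on i {}} = {\<lambda>_. undefined}" by auto
  then show ?thesis by (simp add: NA_def)
qed

lemma cntA_snoc: "cntA X A (R @ [w]) = (cntA X A R)(w := Suc (cntA X A R w))"
  unfolding cntA_def cntl_snoc by (simp add: fun_eq_iff)

lemma cntA_remove:
  assumes A: "A \<subseteq> {..<length X}" and p: "p \<in> A" and w: "X ! p = w"
  shows "cntA X (A - {p}) R = (cntA X A R)(w := Suc (cntA X A R w))"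
proof
  fix v
  let ?S = "{q \<in> {..<length X} - A. X ! q = v}"
  have fin: "finite ?S" by (rule finite_subset[of _ "{..<length X}"]) auto
  have pS: "p \<notin> ?S" using p by auto
  show "cntA X (A - {p}) R v = ((cntA X A R)(w := Suc (cntA X A R w))) v"
  proof (cases "v = w")
    case True
    have "{q \<in> {..<length X} - (A - {p}). X ! q = v} = insert p ?S"
      using A p w True by auto
    then show ?thesis using True fin pS by (simp add: cntA_def)
  next
    case False
    have "{q \<in> {..<length X} - (A - {p}). X ! q = v} = ?S"
      using A p w False by auto
    then show ?thesis using False by (simp add: cntA_def)
  qed
qed

lemma cntl_split:
  assumes A: "A \<subseteq> {..<length X}"
  shows "cntl X w = card {p \<in> A. X ! p = w} + card {p \<in> {..<length X} - A. X ! p = w}"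
proof -
  have "{j. j < length X \<and> X ! j = w} = {p \<in> A. X ! p = w} \<union> {p \<in> {..<length X} - A. X ! p = w}"
    using A by auto
  moreover have "finite {p \<in> A. X ! p = w}" by (rule finite_subset[of _ "{..<length X}"]) (use A in auto)
  ultimately show ?thesis unfolding cntl_def by (subst card_Un_disjoint[symmetric]) auto
qed

lemma Psi_eq:
  assumes "A \<subseteq> {..<length X}"
  shows "Psi \<sigma> \<alpha> \<theta> X A R ys = pprod (Fm \<sigma> \<alpha> \<theta>) (X @ R) * gg (Fm \<sigma> \<alpha> \<theta>) (cntA X A R) ys"
  using assms
proof (induction ys arbitrary: A R)
  case Nil
  then show ?case by (simp add: Psi_def NA_empty)
next
  case (Cons w ys)
  let ?F = "Fm \<sigma> \<alpha> \<theta>"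
  let ?c = "cntA X A R"
  let ?c' = "?c(w := Suc (?c w))"
  let ?a = "card {p \<in> A. X ! p = w}"
  have finA: "finite A" using Cons.prems finite_subset by blast
  have "(\<Sum>p\<in>A. (if w = X ! p then 1 else 0) * Psi \<sigma> \<alpha> \<theta> X (A - {p}) R ys)
      = (\<Sum>p\<in>A. (if w = X ! p then 1 else 0) * (pprod ?F (X @ R) * gg ?F ?c' ys))"
  proof (rule sum.cong[OF refl])
    fix p assume p: "p \<in> A"
    show "(if w = X ! p then 1 else 0) * Psi \<sigma> \<alpha> \<theta> X (A - {p}) R ys = (if w = X ! p then 1 else 0) * (pprod ?F (X @ R) * gg ?F ?c' ys)"
    proof (cases "w = X ! p")
      case True
      have "Psi \<sigma> \<alpha> \<theta> X (A - {p}) R ys = pprod ?F (X @ R) * gg ?F (cntA X (A - {p}) R) ys"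
        using Cons.IH[of "A - {p}" R] Cons.prems by auto
      then show ?thesis using cntA_remove[OF Cons.prems p True[symmetric]] True by simp
    qed simp
  qed
  also have "\<dots> = real ?a * (pprod ?F (X @ R) * gg ?F ?c' ys)"
  proof -
    have "(\<Sum>p\<in>A. (if w = X ! p then 1 else 0) * (pprod ?F (X @ R) * gg ?F ?c' ys))
        = (\<Sum>p\<in>A. if X ! p = w then pprod ?F (X @ R) * gg ?F ?c' ys else 0)"
      by (rule sum.cong) auto
    also have "\<dots> = (\<Sum>p\<in>{p \<in> A. X ! p = w}. pprod ?F (X @ R) * gg ?F ?c' ys)"
      by (rule sum.inter_filter[OF finA, symmetric])
    finally show ?thesis by simp
  qed
  finally have S: "(\<Sum>p\<in>A. (if w = X ! p then 1 else 0) * Psi \<sigma> \<alpha> \<theta> X (A - {p}) R ys) = real ?a * (pprod ?F (X @ R) * gg ?F ?c' ys)" .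
  have P1: "Psi \<sigma> \<alpha> \<theta> X A (R @ [w]) ys = pprod ?F (X @ R) * ?F w (cntl (X @ R) w) * gg ?F ?c' ys"
    using Cons.IH[OF Cons.prems, of "R @ [w]"] pprod_snoc[of ?F "X @ R" w] cntA_snoc[of X A R w] by (simp add: fun_upd_def)
  have cw: "cntl (X @ R) w = ?a + ?c w"
    using cntl_split[OF Cons.prems, of w] by (simp add: cntl_append cntA_def)
  have key: "?F w (?a + ?c w) + (- of_int \<sigma> * \<theta>) * real ?a = ?F w (?c w)"
    by (simp add: Fm_def algebra_simps)
  have "Psi \<sigma> \<alpha> \<theta> X A R (w # ys) = pprod ?F (X @ R) * gg ?F ?c' ys * (?F w (?a + ?c w) + (- of_int \<sigma> * \<theta>) * real ?a)"
    unfolding Psi_Cons[OF Cons.prems] S P1 cw by (simp add: algebra_simps)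
  also have "\<dots> = pprod ?F (X @ R) * gg ?F ?c (w # ys)"
    unfolding key by simp
  finally show ?case .
qed



definition ff :: "nat \<Rightarrow> nat \<Rightarrow> real" where
  "ff c n = (\<Prod>j<c. real n - real j)"

lemma ff_0[simp]: "ff 0 n = 1" by (simp add: ff_def)
lemma ff_Suc: "ff (Suc c) n = ff c n * (real n - real c)" by (simp add: ff_def)

lemma ff_zero: "n < c \<Longrightarrow> ff c n = 0"
  unfolding ff_def by (intro prod_zero) (auto intro!: bexI[of _ n])

lemma ff_nonneg: "0 \<le> ff c n"
proof (cases "n < c")
  case True then show ?thesis by (simp add: ff_zero)
next
  case False then show ?thesis unfolding ff_def by (intro prod_nonneg) auto
qed

lemma ff_shift: "ff c (m + c) = fact (m + c) / fact m"
proof (induction c arbitrary: m)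
  case 0 then show ?case by simp
next
  case (Suc c)
  have "ff (Suc c) (m + Suc c) = ff c ((m + 1) + c) * (real m + 1)"
    by (simp add: ff_Suc algebra_simps)
  also have "\<dots> = fact (m + 1 + c) / fact (m + 1) * (real m + 1)" by (simp only: Suc.IH)
  also have "m + 1 + c = m + Suc c" by simp
  also have "(fact (m + 1) :: real) = (real m + 1) * fact m" by (simp only: fact_Suc Suc_eq_plus1[symmetric]) simp
  also have "\<And>x. x / ((real m + 1) * fact m) * (real m + 1) = (x / fact m :: real)"
  proof -
    fix x :: real
    have a: "real m + 1 \<noteq> 0" by simp
    show "x / ((real m + 1) * fact m) * (real m + 1) = x / fact m"
      using a by (simp add: divide_simps)
  qed
  finally show ?case .
qed

lemma pmf_sums_nat: "pmf (P :: nat pmf) sums 1"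
proof -
  interpret prob_space "measure_pmf P" by (rule prob_space_measure_pmf)
  have "integrable (measure_pmf P) (\<lambda>_. 1::real)" by simp
  then have I: "integrable (count_space UNIV) (pmf P)"
    unfolding measure_pmf_eq_density by (subst (asm) integrable_density) auto
  have "(\<integral>x. 1 \<partial>measure_pmf P) = (1::real)" by simp
  then have "integral\<^sup>L (count_space UNIV) (pmf P) = 1"
    unfolding measure_pmf_eq_density by (subst (asm) integral_density) auto
  with sums_integral_count_space_nat[OF I] show ?thesis by simp
qed

lemma moment_generic:
  fixes P P' :: "nat pmf"
  assumes eq: "\<And>m. pmf P (m + c) * ff c (m + c) = K * pmf P' m"
  shows "integrable (measure_pmf P) (ff c)" and "(\<integral>n. ff c n \<partial>measure_pmf P) = K"
proof -
  define h where "h n = pmf P n * ff c n" for n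
  have "(\<lambda>m. K * pmf P' m) sums (K * 1)" by (rule sums_mult[OF pmf_sums_nat])
  then have "(\<lambda>m. h (m + c)) sums K" by (simp add: h_def eq)
  moreover have "\<forall>i<c. h i = 0" by (simp add: h_def ff_zero)
  ultimately have hs: "h sums K" using sums_zero_iff_shift by blast
  have hnn: "0 \<le> h n" for n by (simp add: h_def ff_nonneg)
  have Ih: "integrable (count_space UNIV) h"
    using hs hnn by (subst integrable_count_space_nat_iff) (auto simp: sums_iff)
  have Kh: "integral\<^sup>L (count_space UNIV) h = K"
    using integral_count_space_nat[OF Ih] hs by (simp add: sums_iff)
  show "integrable (measure_pmf P) (ff c)"
    unfolding measure_pmf_eq_density using Ih unfolding h_def by (subst integrable_density) auto
  show "(\<integral>n. ff c n \<partial>measure_pmf P) = K"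
    unfolding measure_pmf_eq_density using Kh unfolding h_def by (subst integral_density) auto
qed

definition mm :: "int \<Rightarrow> nat \<Rightarrow> real \<Rightarrow> nat \<Rightarrow> real" where
  "mm \<sigma> \<alpha> \<theta> c = \<theta> ^ c * (\<Prod>j<c. real \<alpha> + of_int \<sigma> * real j)"

lemma rising_fact:
  assumes "1 \<le> \<alpha>"
  shows "(\<Prod>j<c. real \<alpha> + real j) = fact (\<alpha> + c - 1) / fact (\<alpha> - 1)"
proof (induction c)
  case 0 then show ?case by simp
next
  case (Suc c)
  have "(\<Prod>j<Suc c. real \<alpha> + real j) = fact (\<alpha> + c - 1) / fact (\<alpha> - 1) * (real \<alpha> + real c)"
    by (simp add: Suc.IH)
  also have "(fact (\<alpha> + Suc c - 1) :: real) = (real \<alpha> + real c) * fact (\<alpha> + c - 1)"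
  proof -
    have "\<alpha> + Suc c - 1 = Suc (\<alpha> + c - 1)" using assms by simp
    moreover have "real (Suc (\<alpha> + c - 1)) = real \<alpha> + real c" using assms by simp
    ultimately show ?thesis by (simp only: fact_Suc)
  qed
  ultimately show ?case by simp
qed

lemma moment_binomial:
  assumes t: "0 \<le> \<theta>" "\<theta> \<le> 1"
  shows "integrable (measure_pmf (binomial_pmf \<alpha> \<theta>)) (ff c) \<and>
         (\<integral>n. ff c n \<partial>measure_pmf (binomial_pmf \<alpha> \<theta>)) = mm (-1) \<alpha> \<theta> c"
proof (cases "c \<le> \<alpha>")
  case True
  have mmeq: "mm (-1) \<alpha> \<theta> c = ff c \<alpha> * \<theta> ^ c"
    by (simp add: mm_def ff_def)
  have ffa: "ff c \<alpha> = fact \<alpha> / fact (\<alpha> - c)"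
    using ff_shift[of c "\<alpha> - c"] True by simp
  have eq: "pmf (binomial_pmf \<alpha> \<theta>) (m + c) * ff c (m + c) = (ff c \<alpha> * \<theta> ^ c) * pmf (binomial_pmf (\<alpha> - c) \<theta>) m" for m
  proof (cases "m + c \<le> \<alpha>")
    case True
    have b1: "real (\<alpha> choose (m + c)) = fact \<alpha> / (fact (m + c) * fact (\<alpha> - (m + c)))"
      using True by (rule binomial_fact)
    have b2: "real ((\<alpha> - c) choose m) = fact (\<alpha> - c) / (fact m * fact (\<alpha> - c - m))"
      using True by (intro binomial_fact) simp
    have e: "\<alpha> - (m + c) = \<alpha> - c - m" by simp
    show ?thesis
      unfolding pmf_binomial[OF t] b1 b2 ffa ff_shift e
      by (simp add: field_simps power_add)
  next
    case False
    then have "\<alpha> - c < m" using \<open>c \<le> \<alpha>\<close> by arith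
    then show ?thesis unfolding pmf_binomial[OF t] by (simp add: binomial_eq_0)
  qed
  show ?thesis using moment_generic[OF eq] mmeq by simp
next
  case False
  have z: "mm (-1) \<alpha> \<theta> c = 0"
    unfolding mm_def using False by (auto intro!: prod_zero bexI[of _ \<alpha>])
  have eq: "pmf (binomial_pmf \<alpha> \<theta>) (m + c) * ff c (m + c) = 0 * pmf (binomial_pmf \<alpha> \<theta>) m" for m
    using False unfolding pmf_binomial[OF t] by (simp add: binomial_eq_0)
  show ?thesis using moment_generic[OF eq] z by simp
qed

lemma moment_poisson:
  assumes t: "0 < r"
  shows "integrable (measure_pmf (poisson_pmf r)) (ff c) \<and>
         (\<integral>n. ff c n \<partial>measure_pmf (poisson_pmf r)) = r ^ c"
proof -
  have eq: "pmf (poisson_pmf r) (m + c) * ff c (m + c) = r ^ c * pmf (poisson_pmf r) m" for m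
    unfolding pmf_poisson[OF t] ff_shift by (simp add: field_simps power_add)
  show ?thesis using moment_generic[OF eq] by simp
qed

lemma moment_return0:
  shows "integrable (measure_pmf (return_pmf 0)) (ff c) \<and>
         (\<integral>n. ff c n \<partial>measure_pmf (return_pmf (0::nat))) = 0 ^ c"
proof -
  have eq: "pmf (return_pmf 0) (m + c) * ff c (m + c) = 0 ^ c * pmf (return_pmf (0::nat)) m" for m
    by (cases c) (auto simp: indicator_def)
  show ?thesis using moment_generic[OF eq] by simp
qed

lemma moment_negbin:
  assumes t: "0 \<le> \<theta>" and a: "1 \<le> \<alpha>"
  shows "integrable (measure_pmf (neg_binomial_pmf \<alpha> (1 / (1 + \<theta>)))) (ff c) \<and>
         (\<integral>n. ff c n \<partial>measure_pmf (neg_binomial_pmf \<alpha> (1 / (1 + \<theta>)))) = mm 1 \<alpha> \<theta> c"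
proof -
  define p where "p = 1 / (1 + \<theta>)"
  have p: "p \<in> {0<..1}" using t by (auto simp: p_def field_simps)
  have q: "1 - p = \<theta> * p" using t by (simp add: p_def field_simps)
  have mmeq: "mm 1 \<alpha> \<theta> c = \<theta> ^ c * (fact (\<alpha> + c - 1) / fact (\<alpha> - 1))"
    using rising_fact[OF a, of c] by (simp add: mm_def)
  have eq: "pmf (neg_binomial_pmf \<alpha> p) (m + c) * ff c (m + c) = mm 1 \<alpha> \<theta> c * pmf (neg_binomial_pmf (\<alpha> + c) p) m" for m
  proof -
    have e1: "m + c + \<alpha> - 1 = (m + c) + (\<alpha> - 1)" using a by simp
    have e2: "m + (\<alpha> + c) - 1 = m + (\<alpha> + c - 1)" using a by simp
    have b1: "real ((m + c) + (\<alpha> - 1) choose (m + c)) = fact ((m + c) + (\<alpha> - 1)) / (fact (m + c) * fact (\<alpha> - 1))"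
      by (subst binomial_fact) auto
    have b2: "real (m + (\<alpha> + c - 1) choose m) = fact (m + (\<alpha> + c - 1)) / (fact m * fact (\<alpha> + c - 1))"
      by (subst binomial_fact) auto
    have e3: "m + (\<alpha> + c - 1) = (m + c) + (\<alpha> - 1)" using a by simp
    show ?thesis
      unfolding pmf_neg_binomial[OF p] q mmeq ff_shift e1 e2 unfolding b1 b2 unfolding e3
      by (simp add: field_simps power_add power_mult_distrib)
  qed
  show ?thesis using moment_generic[OF eq] by (simp add: p_def)
qed



lemma marg_moment:
  assumes s: "\<sigma> \<in> {-1, 0, 1}" and t: "\<theta> \<in> Theta \<sigma>" and a: "1 \<le> \<alpha>"
  shows "integrable (measure_pmf (marg \<sigma> \<alpha> \<theta>)) (ff c) \<and>
         (\<integral>n. ff c n \<partial>measure_pmf (marg \<sigma> \<alpha> \<theta>)) = mm \<sigma> \<alpha> \<theta> c"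
proof -
  consider "\<sigma> = -1" | "\<sigma> = 0" | "\<sigma> = 1" using s by auto
  then show ?thesis
  proof cases
    case 1
    then have "0 \<le> \<theta>" "\<theta> \<le> 1" using t by (auto simp: Theta_def)
    then show ?thesis using moment_binomial[of \<theta> \<alpha> c] 1 by (simp add: marg_def)
  next
    case 2
    then have t0: "0 \<le> \<theta>" using t by (auto simp: Theta_def)
    show ?thesis
    proof (cases "\<theta> = 0")
      case True
      have "mm \<sigma> \<alpha> \<theta> c = 0 ^ c" using True 2 by (cases c) (auto simp: mm_def)
      then show ?thesis using moment_return0[of c] 2 True by (simp add: marg_def)
    next
      case False
      then have r: "0 < real \<alpha> * \<theta>" using t0 a by auto
      have "mm \<sigma> \<alpha> \<theta> c = (real \<alpha> * \<theta>) ^ c" using 2 by (simp add: mm_def power_mult_distrib)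
      then show ?thesis using moment_poisson[OF r, of c] 2 False by (simp add: marg_def)
    qed
  next
    case 3
    then have t0: "0 \<le> \<theta>" using t by (auto simp: Theta_def)
    show ?thesis using moment_negbin[OF t0 a, of c] 3 by (simp add: marg_def)
  qed
qed

lemma cntl_notin: "w \<notin> set xs \<Longrightarrow> cntl xs w = 0"
  by (auto simp: cntl_def)

lemma pprod_set:
  assumes z: "\<And>z. \<phi> z 0 = 1" and s: "\<And>z c. \<phi> z (Suc c) = \<phi> z c * F z c"
  shows "pprod F xs = (\<Prod>z\<in>set xs. \<phi> z (cntl xs z))"
proof (induction xs rule: rev_induct)
  case Nil then show ?case by simp
next
  case (snoc w xs)
  let ?S = "set xs"
  have A: "(\<Prod>z\<in>?S. \<phi> z (cntl xs z)) = (\<Prod>z\<in>insert w ?S. \<phi> z (cntl xs z))"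
  proof (cases "w \<in> ?S")
    case True then show ?thesis by (simp add: insert_absorb)
  next
    case False then show ?thesis by (simp add: cntl_notin z)
  qed
  have "(\<Prod>z\<in>insert w ?S. \<phi> z (cntl xs z)) = \<phi> w (cntl xs w) * (\<Prod>z\<in>insert w ?S - {w}. \<phi> z (cntl xs z))"
    by (rule prod.remove) auto
  moreover have "(\<Prod>z\<in>insert w ?S. \<phi> z (cntl (xs @ [w]) z)) = \<phi> w (cntl (xs @ [w]) w) * (\<Prod>z\<in>insert w ?S - {w}. \<phi> z (cntl (xs @ [w]) z))"
    by (rule prod.remove) auto
  moreover have "(\<Prod>z\<in>insert w ?S - {w}. \<phi> z (cntl (xs @ [w]) z)) = (\<Prod>z\<in>insert w ?S - {w}. \<phi> z (cntl xs z))"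
    by (rule prod.cong) (auto simp: cntl_snoc)
  ultimately show ?case
    using snoc.IH A by (simp add: pprod_snoc cntl_snoc s)
qed

lemma mu_prod:
  fixes P :: "nat pmf" and f :: "'i \<Rightarrow> nat \<Rightarrow> real"
  assumes S: "finite S" and I: "\<And>z. z \<in> S \<Longrightarrow> integrable (measure_pmf P) (f z)"
  shows "integrable (PiM UNIV (\<lambda>_. measure_pmf P)) (\<lambda>\<eta>. \<Prod>z\<in>S. f z (\<eta> z)) \<and>
    (\<integral>\<eta>. (\<Prod>z\<in>S. f z (\<eta> z)) \<partial>PiM UNIV (\<lambda>_. measure_pmf P)) = (\<Prod>z\<in>S. \<integral>n. f z n \<partial>measure_pmf P)"
proof -
  let ?M = "\<lambda>_::'i. measure_pmf P"
  interpret product_prob_space ?M UNIV by unfold_locales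
  have D: "distr (PiM UNIV ?M) (PiM S ?M) (\<lambda>x. restrict x S) = PiM S ?M"
    by (rule distr_PiM_restrict_finite[OF S]) simp
  have R: "(\<lambda>x. restrict x S) \<in> measurable (PiM UNIV ?M) (PiM S ?M)"
    by (rule measurable_restrict_subset) simp
  have B: "(\<lambda>y. \<Prod>z\<in>S. f z (y z)) \<in> borel_measurable (PiM S ?M)"
    by measurable
  have eqf: "(\<lambda>x. \<Prod>z\<in>S. f z (restrict x S z)) = (\<lambda>\<eta>. \<Prod>z\<in>S. f z (\<eta> z))"
    by (auto intro!: prod.cong)
  have I2: "integrable (PiM S ?M) (\<lambda>y. \<Prod>z\<in>S. f z (y z))"
    by (rule product_integrable_prod[OF S I])
  have E2: "(\<integral>y. (\<Prod>z\<in>S. f z (y z)) \<partial>PiM S ?M) = (\<Prod>z\<in>S. \<integral>n. f z n \<partial>measure_pmf P)"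
    by (rule product_integral_prod[OF S I])
  show ?thesis
    using I2 E2 integrable_distr_eq[OF R B] integral_distr[OF R B] D eqf by simp
qed

lemma fmom_pprod: "fmom \<eta> xs = pprod (\<lambda>z c. real (\<eta> z) - real c) xs"
  by (simp add: fmom_def pprod_def)

lemma fmom_prod: "fmom \<eta> xs = (\<Prod>z\<in>set xs. ff (cntl xs z) (\<eta> z))"
  unfolding fmom_pprod by (rule pprod_set) (simp_all add: ff_Suc)

lemma fmom_nonneg: "0 \<le> fmom \<eta> xs"
  unfolding fmom_prod by (intro prod_nonneg) (simp add: ff_nonneg)

lemma mom_prod: "pprod (Fm \<sigma> \<alpha> \<theta>) xs = (\<Prod>z\<in>set xs. mm \<sigma> \<alpha> \<theta> (cntl xs z))"
  by (rule pprod_set) (simp_all add: mm_def Fm_def)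

lemma fmom_moment:
  assumes s: "\<sigma> \<in> {-1, 0, 1}" and t: "\<theta> \<in> Theta \<sigma>" and a: "1 \<le> \<alpha>"
  shows "integrable (mu \<sigma> \<alpha> \<theta>) (\<lambda>\<eta>. fmom \<eta> xs) \<and>
         (\<integral>\<eta>. fmom \<eta> xs \<partial>mu \<sigma> \<alpha> \<theta>) = pprod (Fm \<sigma> \<alpha> \<theta>) xs"
  using mu_prod[of "set xs" "marg \<sigma> \<alpha> \<theta>" "\<lambda>z. ff (cntl xs z)"] marg_moment[OF s t a]
  unfolding fmom_prod mom_prod mu_def by simp



definition phi :: "nat \<Rightarrow> int \<Rightarrow> real" where
  "phi N z = inverse ((1 + \<bar>real_of_int z\<bar> / real N) ^ 2)"

lemma phi_pos: "0 < phi N z"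
proof -
  have "0 < 1 + \<bar>real_of_int z\<bar> / real N" by (simp add: add_pos_nonneg)
  then show ?thesis by (simp add: phi_def)
qed

lemma phi_summable_int:
  assumes N: "1 \<le> N"
  shows "Infinite_Set_Sum.abs_summable_on (phi N) UNIV"
proof -
  have s0: "summable (\<lambda>n. inverse (real n ^ 2))"
    by (rule inverse_power_summable) simp
  have s1: "summable (\<lambda>n. real N ^ 2 * inverse (real (Suc n) ^ 2))"
  proof -
    have "summable (\<lambda>n. inverse (real (Suc n) ^ 2))"
      using summable_Suc_iff[of "\<lambda>n. inverse (real n ^ 2)"] s0 by simp
    then show ?thesis by (rule summable_mult)
  qed
  have le: "norm (phi N (int n)) \<le> real N ^ 2 * inverse (real (Suc n) ^ 2)" for n
  proof -
    have Np: "0 < real N" using N by simp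
    have "(real (Suc n) / real N) \<le> 1 + real n / real N"
      using Np N by (simp add: field_simps)
    then have "(real (Suc n) / real N) ^ 2 \<le> (1 + real n / real N) ^ 2"
      by (rule power_mono) simp
    moreover have "0 < (real (Suc n) / real N) ^ 2" using Np by simp
    ultimately have "inverse ((1 + real n / real N) ^ 2) \<le> inverse ((real (Suc n) / real N) ^ 2)"
      by (rule le_imp_inverse_le)
    also have "\<dots> = real N ^ 2 * inverse (real (Suc n) ^ 2)"
      by (simp add: power_divide field_simps)
    finally show ?thesis using phi_pos[of N "int n"] by (simp add: phi_def)
  qed
  have sn: "summable (\<lambda>n. norm (phi N (int n)))"
    by (rule summable_comparison_test'[OF s1]) (use le in simp)
  have a1: "Infinite_Set_Sum.abs_summable_on (\<lambda>n. phi N (int n)) UNIV"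
    using sn by (simp add: abs_summable_on_nat_iff')
  have a2: "Infinite_Set_Sum.abs_summable_on (\<lambda>n. phi N (- int n)) UNIV"
    using a1 by (simp add: phi_def)
  have r1: "Infinite_Set_Sum.abs_summable_on (phi N) (range int)"
    by (rule abs_summable_on_reindex[of "phi N" int, OF a1])
  have r2: "Infinite_Set_Sum.abs_summable_on (phi N) (range (\<lambda>n. - int n))"
    by (rule abs_summable_on_reindex[of "phi N" "\<lambda>n. - int n", OF a2])
  have U: "range int \<union> range (\<lambda>n. - int n) = UNIV"
  proof (rule set_eqI, rule iffI)
    fix z :: int
    show "z \<in> range int \<union> range (\<lambda>n. - int n)"
    proof (cases "0 \<le> z")
      case True then have "z = int (nat z)" by simp
      then show ?thesis by blast
    next
      case False then have "z = - int (nat (- z))" by simp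
      then show ?thesis by blast
    qed
  qed simp
  show ?thesis using abs_summable_on_union[OF r1 r2] unfolding U .
qed



definition psi :: "nat \<Rightarrow> int ^ 'd::finite \<Rightarrow> real" where
  "psi N x = (\<Prod>i\<in>UNIV. phi N (x $ i))"

lemma psi_pos: "0 < psi N x"
  unfolding psi_def by (intro prod_pos) (simp add: phi_pos)

lemma psi_summable:
  assumes N: "1 \<le> N"
  shows "Infinite_Set_Sum.abs_summable_on (psi N :: int ^ 'd::finite \<Rightarrow> real) UNIV"
proof -
  have a: "Infinite_Set_Sum.abs_summable_on (\<lambda>g. \<Prod>i\<in>(UNIV::'d set). phi N (g i)) (PiE UNIV (\<lambda>_. UNIV))"
    by (rule abs_summable_on_prod_PiE) (use phi_summable_int[OF N] in auto)
  have P: "PiE (UNIV::'d set) (\<lambda>_. UNIV :: int set) = UNIV" by (rule set_eqI) (simp add: PiE_iff)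
  have b: "bij_betw vec_nth (UNIV :: (int ^ 'd) set) UNIV"
  proof -
    have "inj (vec_nth :: int ^ 'd \<Rightarrow> _)" by (rule injI) (simp add: vec_nth_inject)
    moreover have "range (vec_nth :: int ^ 'd \<Rightarrow> _) = UNIV"
    proof (rule set_eqI)
      fix f :: "'d \<Rightarrow> int"
      have "f = vec_nth (vec_lambda f)" by (simp add: vec_lambda_inverse)
      then show "f \<in> range vec_nth \<longleftrightarrow> f \<in> UNIV" by blast
    qed
    ultimately show ?thesis by (simp add: bij_betw_def)
  qed
  have c: "Infinite_Set_Sum.abs_summable_on (\<lambda>g. \<Prod>i\<in>(UNIV::'d set). phi N (g i)) UNIV"
    using a unfolding P .
  show ?thesis
    unfolding psi_def using abs_summable_on_reindex_bij_betw[OF b, of "\<lambda>g. \<Prod>i\<in>UNIV. phi N (g i)"] c by simp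
qed

definition Phi :: "nat \<Rightarrow> nat \<Rightarrow> (int ^ 'd::finite) list \<Rightarrow> real" where
  "Phi N k xs = (\<Prod>j<k. psi N (xs ! j))"

lemma Phi_pos: "0 < Phi N k xs"
  unfolding Phi_def by (intro prod_pos) (simp add: psi_pos)

lemma Phi_summable:
  assumes N: "1 \<le> N"
  shows "Infinite_Set_Sum.abs_summable_on (Phi N k :: (int ^ 'd::finite) list \<Rightarrow> real) {xs. length xs = k}"
proof -
  have a: "Infinite_Set_Sum.abs_summable_on (\<lambda>g. \<Prod>j\<in>{..<k}. psi N (g j :: int ^ 'd)) (PiE {..<k} (\<lambda>_. UNIV))"
    by (rule abs_summable_on_prod_PiE) (use psi_summable[OF N] in auto)
  have "Infinite_Set_Sum.abs_summable_on (\<lambda>g. Phi N k (map g [0..<k]) :: real) (PiE {..<k} (\<lambda>_. UNIV :: (int ^ 'd) set))"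
  proof -
    have e: "Phi N k (map g [0..<k]) = (\<Prod>j\<in>{..<k}. psi N (g j))" for g :: "nat \<Rightarrow> int ^ 'd"
      unfolding Phi_def by (rule prod.cong) auto
    show ?thesis using a by (subst abs_summable_on_cong[OF e refl])
  qed
  then have b: "Infinite_Set_Sum.abs_summable_on (Phi N k) ((\<lambda>g. map g [0..<k]) ` (PiE {..<k} (\<lambda>_. UNIV :: (int ^ 'd) set)))"
    by (rule abs_summable_on_reindex)
  have sub: "{xs. length xs = k} \<subseteq> (\<lambda>g. map g [0..<k]) ` (PiE {..<k} (\<lambda>_. UNIV :: (int ^ 'd) set))"
  proof
    fix xs :: "(int ^ 'd) list" assume xs: "xs \<in> {xs. length xs = k}"
    let ?g = "\<lambda>j. if j < k then xs ! j else undefined"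
    have g1: "?g \<in> PiE {..<k} (\<lambda>_. UNIV)" by (simp add: PiE_iff extensional_def)
    have g2: "map ?g [0..<k] = xs" using xs by (simp add: list_eq_iff_nth_eq)
    show "xs \<in> (\<lambda>g. map g [0..<k]) ` (PiE {..<k} (\<lambda>_. UNIV))" by (rule image_eqI[where f = "\<lambda>g. map g [0..<k]", OF g2[symmetric] g1])
  qed
  show ?thesis by (rule abs_summable_on_subset[OF b sub])
qed



lemma list_norm_ge:
  assumes "j < length v"
  shows "norm (v ! j) \<le> list_norm v"
proof -
  have "(norm (v ! j))\<^sup>2 \<le> (\<Sum>i<length v. (norm (v ! i))\<^sup>2)"
    by (rule member_le_sum[of j "{..<length v}" "\<lambda>i. (norm (v ! i))\<^sup>2"]) (use assms in auto)
  then have "sqrt ((norm (v ! j))\<^sup>2) \<le> list_norm v"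
    unfolding list_norm_def by (rule real_sqrt_le_mono)
  then show ?thesis by simp
qed

lemma schwartz_bound:
  assumes "schwartz k G"
  shows "\<exists>C. \<forall>xs. length xs = k \<longrightarrow> (1 + list_norm xs) ^ m * \<bar>G xs\<bar> \<le> C"
proof -
  have "iter_partial k G G" by (rule iter_partial.base)
  then show ?thesis using assms unfolding schwartz_def by blast
qed

lemma schwartz_summable:
  fixes G :: "(real ^ 'd::finite) list \<Rightarrow> real"
  assumes N: "1 \<le> N" and S: "schwartz k G"
  shows "integrable (count_space {xs :: (int ^ 'd) list. length xs = k}) (\<lambda>xs. G (map (scale_site N) xs))"
proof -
  let ?m = "2 * (k * CARD('d))"
  obtain C where C: "\<And>xs. length xs = k \<Longrightarrow> (1 + list_norm xs) ^ ?m * \<bar>G xs\<bar> \<le> C"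
    using schwartz_bound[OF S, of ?m] by blast
  have Np: "0 < real N" using N by simp
  have bound: "norm (G (map (scale_site N) xs)) \<le> C * Phi N k xs" if xs: "length xs = k" for xs :: "(int ^ 'd) list"
  proof -
    let ?v = "map (scale_site N) xs"
    let ?L = "1 + list_norm ?v"
    let ?Q = "\<Prod>j<k. \<Prod>i\<in>(UNIV::'d set). (1 + \<bar>real_of_int (xs ! j $ i)\<bar> / real N) ^ 2"
    have ln0: "0 \<le> list_norm ?v" unfolding list_norm_def by (intro real_sqrt_ge_zero sum_nonneg) simp
    have fac: "(1 + \<bar>real_of_int (xs ! j $ i)\<bar> / real N) ^ 2 \<le> ?L ^ 2" if j: "j < k" for j i
    proof -
      have "\<bar>real_of_int (xs ! j $ i)\<bar> / real N = \<bar>?v ! j $ i\<bar>"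
        using j xs Np by (simp add: scale_site_def)
      also have "\<dots> \<le> norm (?v ! j)" by (rule component_le_norm_cart)
      also have "\<dots> \<le> list_norm ?v" by (rule list_norm_ge) (use j xs in simp)
      finally show ?thesis by (intro power_mono) (auto simp: add_nonneg_nonneg)
    qed
    have "?Q \<le> (\<Prod>j<k. \<Prod>i\<in>(UNIV::'d set). ?L ^ 2)"
      by (intro prod_mono conjI) (use fac in \<open>auto intro!: prod_nonneg\<close>)
    also have "\<dots> = ?L ^ ?m"
      by (simp add: power_mult[symmetric] mult_ac)
    finally have QL: "?Q \<le> ?L ^ ?m" .
    have pp: "0 < 1 + \<bar>r\<bar> / real N" for r :: real using Np by (simp add: add_pos_nonneg)
    have Qpos: "0 < ?Q" by (intro prod_pos zero_less_power) (use pp in auto)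
    have Phi: "Phi N k xs = inverse ?Q"
      unfolding Phi_def psi_def phi_def by (simp only: prod_inversef[unfolded comp_def])
    have "\<bar>G ?v\<bar> * ?Q \<le> \<bar>G ?v\<bar> * ?L ^ ?m" by (rule mult_left_mono[OF QL]) simp
    also have "\<dots> \<le> C" using C[of ?v] xs by (simp add: mult.commute)
    finally have "\<bar>G ?v\<bar> \<le> C / ?Q" using Qpos by (simp add: field_simps)
    then show ?thesis by (simp add: Phi divide_inverse)
  qed
  have "Infinite_Set_Sum.abs_summable_on (\<lambda>xs. C * Phi N k xs) {xs :: (int ^ 'd) list. length xs = k}"
    by (rule abs_summable_on_cmult_right[OF Phi_summable[OF N]])
  then have "Infinite_Set_Sum.abs_summable_on (\<lambda>xs. G (map (scale_site N) xs)) {xs :: (int ^ 'd) list. length xs = k}"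
    by (rule abs_summable_on_comparison_test') (use bound in auto)
  then show ?thesis by (simp add: abs_summable_on_def)
qed



lemma count_int_bound:
  fixes f g :: "'a \<Rightarrow> real"
  assumes g: "integrable (count_space A) g" and le: "\<And>x. x \<in> A \<Longrightarrow> \<bar>f x\<bar> \<le> c * \<bar>g x\<bar>"
  shows "integrable (count_space A) f"
proof (rule Bochner_Integration.integrable_bound[of _ "\<lambda>x. c * g x"])
  show "integrable (count_space A) (\<lambda>x. c * g x)" using g by simp
  show "f \<in> borel_measurable (count_space A)" by simp
  have "\<bar>f x\<bar> \<le> \<bar>c * g x\<bar>" if "x \<in> A" for x
  proof -
    have "c * \<bar>g x\<bar> \<le> \<bar>c\<bar> * \<bar>g x\<bar>" by (intro mult_right_mono) auto
    then show ?thesis using le[OF that] by (simp add: abs_mult)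
  qed
  then show "AE x in count_space A. norm (f x) \<le> norm (c * g x)"
    by (simp add: AE_count_space)
qed

lemma abs_mult_bound: "\<bar>F\<bar> \<le> (K::real) \<Longrightarrow> \<bar>b * F\<bar> \<le> K * \<bar>b\<bar>"
  using mult_left_mono[of "\<bar>F\<bar>" K "\<bar>b\<bar>"] by (simp add: abs_mult mult.commute)

lemma KER:
  fixes a :: "'a \<Rightarrow> real" and b :: "'b \<Rightarrow> real"
  assumes a: "integrable (count_space A) a" and b: "integrable (count_space B) b"
    and F: "\<And>x y. x \<in> A \<Longrightarrow> y \<in> B \<Longrightarrow> \<bar>F x y\<bar> \<le> K"
  shows "\<And>x. x \<in> A \<Longrightarrow> integrable (count_space B) (\<lambda>y. a x * b y * F x y)"
    and "integrable (count_space A) (\<lambda>x. \<integral>y. a x * b y * F x y \<partial>count_space B)"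
proof -
  have K0: "0 \<le> K" if "x \<in> A" "y \<in> B" for x y using F[OF that] by linarith
  have I1: "integrable (count_space B) (\<lambda>y. b y * F x y)" if x: "x \<in> A" for x
    by (rule count_int_bound[OF b, of _ K]) (rule abs_mult_bound, rule F[OF x], simp)
  show "integrable (count_space B) (\<lambda>y. a x * b y * F x y)" if "x \<in> A" for x
    using I1[OF that] by (simp add: mult.assoc)
  have bnd: "\<bar>\<integral>y. a x * b y * F x y \<partial>count_space B\<bar> \<le> (K * (\<integral>y. \<bar>b y\<bar> \<partial>count_space B)) * \<bar>a x\<bar>" if x: "x \<in> A" for x
  proof -
    have "(\<integral>y. a x * b y * F x y \<partial>count_space B) = a x * (\<integral>y. b y * F x y \<partial>count_space B)"
      by (simp add: mult.assoc)
    moreover have "\<bar>\<integral>y. b y * F x y \<partial>count_space B\<bar> \<le> (\<integral>y. K * \<bar>b y\<bar> \<partial>count_space B)"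
    proof -
      have "\<bar>\<integral>y. b y * F x y \<partial>count_space B\<bar> \<le> (\<integral>y. \<bar>b y * F x y\<bar> \<partial>count_space B)"
        using integral_norm_bound[of "count_space B" "\<lambda>y. b y * F x y"] by simp
      also have "\<dots> \<le> (\<integral>y. K * \<bar>b y\<bar> \<partial>count_space B)"
      proof (rule integral_mono)
        show "integrable (count_space B) (\<lambda>y. \<bar>b y * F x y\<bar>)" by (rule integrable_abs[OF I1[OF x]])
        show "integrable (count_space B) (\<lambda>y. K * \<bar>b y\<bar>)" using b by simp
        show "\<bar>b y * F x y\<bar> \<le> K * \<bar>b y\<bar>" if "y \<in> space (count_space B)" for y
          by (rule abs_mult_bound, rule F[OF x]) (use that in simp)
      qed
      finally show ?thesis .
    qed
    moreover have "(\<integral>y. K * \<bar>b y\<bar> \<partial>count_space B) = K * (\<integral>y. \<bar>b y\<bar> \<partial>count_space B)" by simp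
    ultimately have "\<bar>a x\<bar> * \<bar>\<integral>y. b y * F x y \<partial>count_space B\<bar> \<le> \<bar>a x\<bar> * (K * (\<integral>y. \<bar>b y\<bar> \<partial>count_space B))"
      by (intro mult_left_mono) auto
    with \<open>(\<integral>y. a x * b y * F x y \<partial>count_space B) = a x * (\<integral>y. b y * F x y \<partial>count_space B)\<close>
    show ?thesis by (simp only: abs_mult mult.commute)
  qed
  show "integrable (count_space A) (\<lambda>x. \<integral>y. a x * b y * F x y \<partial>count_space B)"
    by (rule count_int_bound[OF a bnd])
qed

lemma integral_infsum_bound:
  fixes f :: "'a \<Rightarrow> 'b \<Rightarrow> real"
  assumes M: "prob_space M"
  and A: "countable A"
  and int: "\<And>a. a \<in> A \<Longrightarrow> integrable M (f a)"
  and summ: "integrable (count_space A) (\<lambda>a. \<integral>x. \<bar>f a x\<bar> \<partial>M)"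
  shows "(\<integral>x. \<bar>infsum (\<lambda>a. f a x) A\<bar> \<partial>M) \<le> infsum (\<lambda>a. \<integral>x. \<bar>f a x\<bar> \<partial>M) A"
proof -
  have int': "\<And>a. a \<in> A \<Longrightarrow> integrable M (\<lambda>x. \<bar>f a x\<bar>)" using int by simp
  have summ': "integrable (count_space A) (\<lambda>a. \<integral>x. \<bar>\<bar>f a x\<bar>\<bar> \<partial>M)" using summ by simp
  note S = integral_infsum_swap[OF M A int' summ']
  note T = integral_infsum_swap[OF M A int summ]
  have "(\<integral>x. \<bar>infsum (\<lambda>a. f a x) A\<bar> \<partial>M) \<le> (\<integral>x. infsum (\<lambda>a. \<bar>f a x\<bar>) A \<partial>M)"
  proof (rule integral_mono)
    show "integrable M (\<lambda>x. \<bar>infsum (\<lambda>a. f a x) A\<bar>)" by (rule integrable_abs[OF T(1)])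
    show "integrable M (\<lambda>x. infsum (\<lambda>a. \<bar>f a x\<bar>) A)" by (rule S(1))
    fix x
    show "\<bar>infsum (\<lambda>a. f a x) A\<bar> \<le> infsum (\<lambda>a. \<bar>f a x\<bar>) A"
    proof (cases "(\<lambda>a. f a x) summable_on A")
      case True
      have "Infinite_Sum.abs_summable_on (\<lambda>a. f a x) A"
        by (rule summable_on_iff_abs_summable_on_real[THEN iffD1, OF True])
      from norm_infsum_bound[OF this] show ?thesis by (simp only: real_norm_def)
    next
      case False
      have "infsum (\<lambda>a. f a x) A = 0" by (rule infsum_not_exists[OF False])
      moreover have "0 \<le> infsum (\<lambda>a. \<bar>f a x\<bar>) A" by (rule infsum_nonneg) simp
      ultimately show ?thesis by simp
    qed
  qed
  also have "\<dots> = infsum (\<lambda>a. \<integral>x. \<bar>f a x\<bar> \<partial>M) A" by (rule S(2))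
  finally show ?thesis .
qed



lemma Fm_bound:
  assumes s: "\<sigma> \<in> {-1, 0, 1}" and t: "0 \<le> \<theta>" and c: "c \<le> L"
  shows "\<bar>Fm \<sigma> \<alpha> \<theta> z c\<bar> \<le> \<theta> * (real \<alpha> + real L) + 1"
proof -
  have "\<bar>real \<alpha> + of_int \<sigma> * real c\<bar> \<le> real \<alpha> + real L"
    using s c by auto
  then have "\<theta> * \<bar>real \<alpha> + of_int \<sigma> * real c\<bar> \<le> \<theta> * (real \<alpha> + real L)"
    by (rule mult_left_mono) (rule t)
  then show ?thesis using t by (simp add: Fm_def abs_mult)
qed

lemma pprod_bound:
  assumes s: "\<sigma> \<in> {-1, 0, 1}" and t: "0 \<le> \<theta>" and len: "length zs \<le> L"
  shows "\<bar>pprod (Fm \<sigma> \<alpha> \<theta>) zs\<bar> \<le> (\<theta> * (real \<alpha> + real L) + 1) ^ L"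
proof -
  let ?B = "\<theta> * (real \<alpha> + real L) + 1"
  have B1: "1 \<le> ?B" using t by simp
  have "\<bar>pprod (Fm \<sigma> \<alpha> \<theta>) zs\<bar> = (\<Prod>m<length zs. \<bar>Fm \<sigma> \<alpha> \<theta> (zs ! m) (card {j. j < m \<and> zs ! j = zs ! m})\<bar>)"
    by (simp add: pprod_def abs_prod)
  also have "\<dots> \<le> (\<Prod>m<length zs. ?B)"
  proof (rule prod_mono, rule conjI)
    fix m assume m: "m \<in> {..<length zs}"
    have "card {j. j < m \<and> zs ! j = zs ! m} \<le> card {..<m}"
      by (rule card_mono) auto
    then have "card {j. j < m \<and> zs ! j = zs ! m} \<le> L" using m len by simp
    then show "\<bar>Fm \<sigma> \<alpha> \<theta> (zs ! m) (card {j. j < m \<and> zs ! j = zs ! m})\<bar> \<le> ?B"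
      by (rule Fm_bound[OF s t])
  qed simp
  also have "\<dots> = ?B ^ length zs" by simp
  also have "\<dots> \<le> ?B ^ L" by (rule power_increasing[OF len B1])
  finally show ?thesis .
qed

lemma NA_bound:
  assumes A: "finite A" and J: "finite J"
  shows "0 \<le> NA X A J ys \<and> NA X A J ys \<le> real (card A) ^ card J"
proof -
  let ?S = "{i. i \<in> J \<rightarrow>\<^sub>E A \<and> inj_on i J}"
  have fS: "finite ?S" by (rule finite_subset[of _ "J \<rightarrow>\<^sub>E A"]) (use A J in \<open>auto intro: finite_PiE\<close>)
  have t0: "0 \<le> (\<Prod>j\<in>J. if ys ! j = X ! (i j) then 1 else (0::real))" for i
    by (rule prod_nonneg) auto
  have t1: "(\<Prod>j\<in>J. if ys ! j = X ! (i j) then 1 else (0::real)) \<le> 1" for i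
    by (rule prod_le_1) auto
  have "NA X A J ys \<le> (\<Sum>i\<in>?S. 1)"
    unfolding NA_def by (rule sum_mono) (rule t1)
  also have "\<dots> = real (card ?S)" by simp
  also have "card ?S \<le> card (J \<rightarrow>\<^sub>E A)"
    by (rule card_mono) (use A J in \<open>auto intro: finite_PiE\<close>)
  also have "card (J \<rightarrow>\<^sub>E A) = card A ^ card J" using J by (simp add: card_PiE)
  finally have up: "NA X A J ys \<le> real (card A) ^ card J" by simp
  have "0 \<le> NA X A J ys" unfolding NA_def by (rule sum_nonneg) (rule t0)
  with up show ?thesis by simp
qed

lemma curly_eq:
  "curly h \<eta> xs ys = (\<Sum>J | J \<subseteq> {0..<length ys} \<and> card J = h.
      fmom \<eta> (xs @ nths ys ({0..<length ys} - J)) * NA xs {0..<length xs} J ys)"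
  by (simp add: curly_def NA_def)

definition Cc :: "int \<Rightarrow> nat \<Rightarrow> real \<Rightarrow> nat \<Rightarrow> 'a list \<Rightarrow> 'a list \<Rightarrow> real" where
  "Cc \<sigma> \<alpha> \<theta> h xs ys = (\<Sum>J | J \<subseteq> {0..<length ys} \<and> card J = h.
      pprod (Fm \<sigma> \<alpha> \<theta>) (xs @ nths ys ({0..<length ys} - J)) * NA xs {0..<length xs} J ys)"

lemma NA_nonneg: "0 \<le> NA X A J ys"
  unfolding NA_def by (intro sum_nonneg prod_nonneg) auto

lemma curly_nonneg: "0 \<le> curly h \<eta> xs ys"
  unfolding curly_eq
  by (intro sum_nonneg mult_nonneg_nonneg fmom_nonneg NA_nonneg)

lemma curly_moment:
  assumes s: "\<sigma> \<in> {-1, 0, 1}" and t: "\<theta> \<in> Theta \<sigma>" and a: "1 \<le> \<alpha>"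
  shows "integrable (mu \<sigma> \<alpha> \<theta>) (\<lambda>\<eta>. curly h \<eta> xs ys) \<and>
         (\<integral>\<eta>. curly h \<eta> xs ys \<partial>mu \<sigma> \<alpha> \<theta>) = Cc \<sigma> \<alpha> \<theta> h xs ys"
proof -
  note FM = fmom_moment[OF s t a]
  have "integrable (mu \<sigma> \<alpha> \<theta>) (\<lambda>\<eta>. \<Sum>J | J \<subseteq> {0..<length ys} \<and> card J = h.
      fmom \<eta> (xs @ nths ys ({0..<length ys} - J)) * NA xs {0..<length xs} J ys)"
    by (simp add: FM[THEN conjunct1])
  moreover have "(\<integral>\<eta>. (\<Sum>J | J \<subseteq> {0..<length ys} \<and> card J = h.
      fmom \<eta> (xs @ nths ys ({0..<length ys} - J)) * NA xs {0..<length xs} J ys) \<partial>mu \<sigma> \<alpha> \<theta>) = Cc \<sigma> \<alpha> \<theta> h xs ys"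
    unfolding Cc_def using FM by (subst Bochner_Integration.integral_sum) auto
  ultimately show ?thesis unfolding curly_eq by simp
qed

lemma pprod_nonneg:
  fixes zs :: "(int ^ 'd::finite) list"
  assumes s: "\<sigma> \<in> {-1, 0, 1}" and t: "\<theta> \<in> Theta \<sigma>" and a: "1 \<le> \<alpha>"
  shows "0 \<le> pprod (Fm \<sigma> \<alpha> \<theta>) zs"
proof -
  have "0 \<le> (\<integral>\<eta>. fmom \<eta> zs \<partial>(mu \<sigma> \<alpha> \<theta> :: (int ^ 'd::finite \<Rightarrow> nat) measure))"
    by (rule integral_nonneg_AE) (simp add: fmom_nonneg)
  then show ?thesis using fmom_moment[OF s t a, where 'a='d, of zs] by simp
qed



lemma Cc_bound:
  fixes xs ys :: "(int ^ 'd::finite) list"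
  assumes s: "\<sigma> \<in> {-1, 0, 1}" and t: "\<theta> \<in> Theta \<sigma>" and a: "1 \<le> \<alpha>"
    and k: "1 \<le> length xs"
  shows "0 \<le> Cc \<sigma> \<alpha> \<theta> h xs ys \<and>
    Cc \<sigma> \<alpha> \<theta> h xs ys \<le> 2 ^ length ys * ((\<theta> * (real \<alpha> + real (length xs + length ys)) + 1) ^ (length xs + length ys) * real (length xs) ^ length ys)"
proof -
  let ?k = "length xs"
  let ?l = "length ys"
  let ?B = "(\<theta> * (real \<alpha> + real (?k + ?l)) + 1) ^ (?k + ?l)"
  let ?S = "{J. J \<subseteq> {0..<?l} \<and> card J = h}"
  have t0: "0 \<le> \<theta>" using t by (auto simp: Theta_def split: if_splits)
  have tm: "0 \<le> pprod (Fm \<sigma> \<alpha> \<theta>) (xs @ nths ys ({0..<?l} - J)) * NA xs {0..<?k} J ys \<and>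
      pprod (Fm \<sigma> \<alpha> \<theta>) (xs @ nths ys ({0..<?l} - J)) * NA xs {0..<?k} J ys \<le> ?B * real ?k ^ ?l"
    if J: "J \<in> ?S" for J
  proof -
    have fJ: "finite J" using J finite_subset by auto
    have cJ: "card J \<le> ?l" using J card_mono[of "{0..<?l}" J] by auto
    have p0: "0 \<le> pprod (Fm \<sigma> \<alpha> \<theta>) (xs @ nths ys ({0..<?l} - J))"
      by (rule pprod_nonneg[OF s t a])
    have "length (nths ys ({0..<?l} - J)) \<le> ?l"
      by (simp add: length_nths card_mono[of "{..<?l}", THEN order_trans] ) (rule order_trans[OF card_mono[of "{..<?l}"]], auto)
    then have len: "length (xs @ nths ys ({0..<?l} - J)) \<le> ?k + ?l" by simp
    have pB: "pprod (Fm \<sigma> \<alpha> \<theta>) (xs @ nths ys ({0..<?l} - J)) \<le> ?B"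
      using pprod_bound[OF s t0 len, of \<alpha>] by simp
    have NB: "NA xs {0..<?k} J ys \<le> real ?k ^ card J" and N0: "0 \<le> NA xs {0..<?k} J ys"
      using NA_bound[of "{0..<?k}" J xs ys] fJ by auto
    have "real ?k ^ card J \<le> real ?k ^ ?l" using k cJ by (intro power_increasing) auto
    with NB have NB': "NA xs {0..<?k} J ys \<le> real ?k ^ ?l" by linarith
    show ?thesis using p0 N0 pB NB' by (auto intro: mult_mono mult_nonneg_nonneg)
  qed
  have "Cc \<sigma> \<alpha> \<theta> h xs ys \<le> real (card ?S) * (?B * real ?k ^ ?l)"
    unfolding Cc_def by (rule sum_bounded_above) (use tm in blast)
  also have "real (card ?S) \<le> 2 ^ ?l"
  proof -
    have "card ?S \<le> card (Pow {0..<?l})" by (rule card_mono) auto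
    then show ?thesis by (simp add: card_Pow)
  qed
  then have "real (card ?S) * (?B * real ?k ^ ?l) \<le> 2 ^ ?l * (?B * real ?k ^ ?l)"
    by (rule mult_right_mono) (use t0 in \<open>auto intro!: mult_nonneg_nonneg zero_le_power\<close>)
  finally have up: "Cc \<sigma> \<alpha> \<theta> h xs ys \<le> 2 ^ ?l * (?B * real ?k ^ ?l)" .
  have "0 \<le> Cc \<sigma> \<alpha> \<theta> h xs ys"
    unfolding Cc_def by (rule sum_nonneg) (use tm in blast)
  with up show ?thesis by simp
qed

lemma comb_curly:
  "(\<Sum>h = 0..length ys. (- of_int \<sigma> * \<theta>) ^ h * Cc \<sigma> \<alpha> \<theta> h xs ys) =
     pprod (Fm \<sigma> \<alpha> \<theta>) xs * pprod (Fm \<sigma> \<alpha> \<theta>) ys"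
proof -
  let ?l = "length ys"
  let ?k = "length xs"
  let ?t = "- of_int \<sigma> * \<theta> :: real"
  let ?f = "\<lambda>J. ?t ^ card J * pprod (Fm \<sigma> \<alpha> \<theta>) (xs @ [] @ nths ys ({..<?l} - J)) * NA xs {..<?k} J ys"
  have c0: "cntA xs {..<?k} [] = (\<lambda>_. 0)" by (simp add: cntA_def fun_eq_iff)
  have P: "Psi \<sigma> \<alpha> \<theta> xs {..<?k} [] ys = pprod (Fm \<sigma> \<alpha> \<theta>) xs * pprod (Fm \<sigma> \<alpha> \<theta>) ys"
    using Psi_eq[of "{..<?k}" xs \<sigma> \<alpha> \<theta> "[]" ys] by (simp add: c0 pprod_gg)
  have "(\<Sum>h = 0..?l. ?t ^ h * Cc \<sigma> \<alpha> \<theta> h xs ys) =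
      (\<Sum>h \<in> {0..?l}. \<Sum>J \<in> {x. x \<in> Pow {..<?l} \<and> card x = h}. ?f J)"
  proof (rule sum.cong[OF refl])
    fix h assume "h \<in> {0..?l}"
    have e: "{J. J \<subseteq> {0..<?l} \<and> card J = h} = {x. x \<in> Pow {..<?l} \<and> card x = h}" by auto
    show "?t ^ h * Cc \<sigma> \<alpha> \<theta> h xs ys = (\<Sum>J \<in> {x. x \<in> Pow {..<?l} \<and> card x = h}. ?f J)"
      unfolding Cc_def e sum_distrib_left
      by (rule sum.cong[OF refl]) (simp add: atLeast0LessThan mult.assoc)
  qed
  also have "\<dots> = (\<Sum>J \<in> Pow {..<?l}. ?f J)"
  proof (rule sum.group)
    show "card ` Pow {..<?l} \<subseteq> {0..?l}"
    proof
      fix x assume "x \<in> card ` Pow {..<?l}"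
      then obtain J where "J \<subseteq> {..<?l}" "x = card J" by auto
      then show "x \<in> {0..?l}" using card_mono[of "{..<?l}" J] by auto
    qed
  qed auto
  also have "\<dots> = Psi \<sigma> \<alpha> \<theta> xs {..<?k} [] ys" by (simp add: Psi_def)
  finally show ?thesis using P by simp
qed



lemma mu_prob: "prob_space (mu \<sigma> \<alpha> \<theta> :: (int ^ 'd::finite \<Rightarrow> nat) measure)"
  unfolding mu_def by (rule prob_space_PiM) (rule prob_space_measure_pmf)

lemma countable_lists: "countable {xs :: (int ^ 'd::finite) list. length xs = k}"
  by (rule countable_subset[OF subset_UNIV]) simp

lemma E_pairing:
  fixes G :: "(real ^ 'd::finite) list \<Rightarrow> real"
  assumes s: "\<sigma> \<in> {-1, 0, 1}" and t: "\<theta> \<in> Theta \<sigma>" and a: "1 \<le> \<alpha>"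
    and N: "1 \<le> N" and S: "schwartz k G"
  shows "(\<integral>\<eta>. pairing k G N \<eta> \<partial>(mu \<sigma> \<alpha> \<theta> :: (int ^ 'd \<Rightarrow> nat) measure)) =
    1 / real N ^ (k * CARD('d)) * (\<integral>xs. G (map (scale_site N) xs) * pprod (Fm \<sigma> \<alpha> \<theta>) xs \<partial>count_space {xs :: (int ^ 'd) list. length xs = k})"
proof -
  let ?mu = "mu \<sigma> \<alpha> \<theta> :: (int ^ 'd \<Rightarrow> nat) measure"
  let ?A = "{xs :: (int ^ 'd) list. length xs = k}"
  let ?g = "\<lambda>xs. G (map (scale_site N) xs)"
  let ?B = "(\<theta> * (real \<alpha> + real k) + 1) ^ k"
  have t0: "0 \<le> \<theta>" using t by (auto simp: Theta_def split: if_splits)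
  note FM = fmom_moment[OF s t a, where 'a = 'd]
  have gI: "integrable (count_space ?A) ?g" by (rule schwartz_summable[OF N S])
  have int: "integrable ?mu (\<lambda>\<eta>. ?g xs * fmom \<eta> xs)" for xs
    using FM[of xs] by simp
  have ab: "(\<integral>\<eta>. \<bar>?g xs * fmom \<eta> xs\<bar> \<partial>?mu) = \<bar>?g xs\<bar> * pprod (Fm \<sigma> \<alpha> \<theta>) xs" for xs
  proof -
    have "(\<lambda>\<eta>. \<bar>?g xs * fmom \<eta> xs\<bar>) = (\<lambda>\<eta>. \<bar>?g xs\<bar> * fmom \<eta> xs)"
      by (simp add: abs_mult fmom_nonneg)
    then show ?thesis using FM[of xs] by simp
  qed
  have summ: "integrable (count_space ?A) (\<lambda>xs. \<integral>\<eta>. \<bar>?g xs * fmom \<eta> xs\<bar> \<partial>?mu)"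
  proof (rule count_int_bound[OF gI, of _ ?B])
    fix xs assume xs: "xs \<in> ?A"
    have p0: "0 \<le> pprod (Fm \<sigma> \<alpha> \<theta>) xs" by (rule pprod_nonneg[OF s t a])
    have pB: "pprod (Fm \<sigma> \<alpha> \<theta>) xs \<le> ?B" using pprod_bound[OF s t0, of xs k \<alpha>] xs by simp
    show "\<bar>\<integral>\<eta>. \<bar>?g xs * fmom \<eta> xs\<bar> \<partial>?mu\<bar> \<le> ?B * \<bar>?g xs\<bar>"
      unfolding ab using p0 pB by (simp add: abs_mult mult.commute mult_left_mono)
  qed
  note SW = integral_infsum_swap[OF mu_prob countable_lists int summ]
  have "(\<integral>\<eta>. pairing k G N \<eta> \<partial>?mu) = 1 / real N ^ (k * CARD('d)) * (\<integral>\<eta>. infsum (\<lambda>xs. ?g xs * fmom \<eta> xs) ?A \<partial>?mu)"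
    by (simp add: pairing_def)
  also have "(\<integral>\<eta>. infsum (\<lambda>xs. ?g xs * fmom \<eta> xs) ?A \<partial>?mu) = infsum (\<lambda>xs. \<integral>\<eta>. ?g xs * fmom \<eta> xs \<partial>?mu) ?A"
    by (rule SW(2))
  also have "\<dots> = infsum (\<lambda>xs. ?g xs * pprod (Fm \<sigma> \<alpha> \<theta>) xs) ?A"
    using FM by simp
  also have "\<dots> = (\<integral>xs. ?g xs * pprod (Fm \<sigma> \<alpha> \<theta>) xs \<partial>count_space ?A)"
    by (rule infsum_real_eq_integral)
  finally show ?thesis .
qed

lemma E_tensor:
  fixes G H :: "(real ^ 'd::finite) list \<Rightarrow> real"
  assumes s: "\<sigma> \<in> {-1, 0, 1}" and t: "\<theta> \<in> Theta \<sigma>" and a: "1 \<le> \<alpha>"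
    and N: "1 \<le> N" and SG: "schwartz k G" and SH: "schwartz l H" and k: "1 \<le> k"
  shows "(\<integral>\<eta>. pairing_tensor k l h G H N \<eta> \<partial>(mu \<sigma> \<alpha> \<theta> :: (int ^ 'd \<Rightarrow> nat) measure)) =
    1 / real N ^ ((k + l - h) * CARD('d)) *
    (\<integral>xs. (\<integral>ys. G (map (scale_site N) xs) * H (map (scale_site N) ys) * Cc \<sigma> \<alpha> \<theta> h xs ys
        \<partial>count_space {ys :: (int ^ 'd) list. length ys = l}) \<partial>count_space {xs :: (int ^ 'd) list. length xs = k})"
proof -
  let ?mu = "mu \<sigma> \<alpha> \<theta> :: (int ^ 'd \<Rightarrow> nat) measure"
  let ?A = "{xs :: (int ^ 'd) list. length xs = k}"
  let ?B = "{ys :: (int ^ 'd) list. length ys = l}"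
  let ?g = "\<lambda>xs. G (map (scale_site N) xs)"
  let ?hh = "\<lambda>ys. H (map (scale_site N) ys)"
  let ?K = "2 ^ l * ((\<theta> * (real \<alpha> + real (k + l)) + 1) ^ (k + l) * real k ^ l)"
  let ?C = "Cc \<sigma> \<alpha> \<theta> h"
  let ?f1 = "\<lambda>xs ys \<eta>. ?g xs * ?hh ys * curly h \<eta> xs ys"
  have gI: "integrable (count_space ?A) ?g" by (rule schwartz_summable[OF N SG])
  have hI: "integrable (count_space ?B) ?hh" by (rule schwartz_summable[OF N SH])
  note CM = curly_moment[OF s t a, where 'a = 'd]
  have Cb: "0 \<le> ?C xs ys \<and> ?C xs ys \<le> ?K" if "xs \<in> ?A" "ys \<in> ?B" for xs ys
    using Cc_bound[OF s t a, of xs h ys] that k by simp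
  have int1: "integrable ?mu (?f1 xs ys)" for xs ys
    using CM[of h xs ys] by simp
  have ab1: "(\<integral>\<eta>. \<bar>?f1 xs ys \<eta>\<bar> \<partial>?mu) = \<bar>?g xs\<bar> * \<bar>?hh ys\<bar> * ?C xs ys" for xs ys
  proof -
    have "(\<lambda>\<eta>. \<bar>?f1 xs ys \<eta>\<bar>) = (\<lambda>\<eta>. (\<bar>?g xs\<bar> * \<bar>?hh ys\<bar>) * curly h \<eta> xs ys)"
      by (simp add: abs_mult curly_nonneg)
    then show ?thesis using CM[of h xs ys] by simp
  qed
  have summ1: "integrable (count_space ?B) (\<lambda>ys. \<integral>\<eta>. \<bar>?f1 xs ys \<eta>\<bar> \<partial>?mu)" if xs: "xs \<in> ?A" for xs
  proof (rule count_int_bound[OF hI, of _ "\<bar>?g xs\<bar> * ?K"])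
    fix ys assume ys: "ys \<in> ?B"
    have "\<bar>?g xs\<bar> * \<bar>?hh ys\<bar> * ?C xs ys \<le> \<bar>?g xs\<bar> * \<bar>?hh ys\<bar> * ?K"
      using Cb[OF xs ys] by (intro mult_left_mono) auto
    moreover have "0 \<le> \<bar>?g xs\<bar> * \<bar>?hh ys\<bar> * ?C xs ys" using Cb[OF xs ys] by simp
    ultimately show "\<bar>\<integral>\<eta>. \<bar>?f1 xs ys \<eta>\<bar> \<partial>?mu\<bar> \<le> \<bar>?g xs\<bar> * ?K * \<bar>?hh ys\<bar>"
      unfolding ab1 by (simp add: mult_ac)
  qed
  note SW1 = integral_infsum_swap[OF mu_prob countable_lists int1 summ1]
  note BD1 = integral_infsum_bound[OF mu_prob countable_lists int1 summ1]
  let ?f2 = "\<lambda>xs \<eta>. infsum (\<lambda>ys. ?f1 xs ys \<eta>) ?B"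
  have int2: "integrable ?mu (?f2 xs)" if "xs \<in> ?A" for xs using SW1(1)[OF that] .
  have hab: "integrable (count_space ?B) (\<lambda>ys. \<bar>?hh ys\<bar>)" using hI by simp
  have summ2: "integrable (count_space ?A) (\<lambda>xs. \<integral>\<eta>. \<bar>?f2 xs \<eta>\<bar> \<partial>?mu)"
  proof (rule count_int_bound[OF gI, of _ "?K * (\<integral>ys. \<bar>?hh ys\<bar> \<partial>count_space ?B)"])
    fix xs assume xs: "xs \<in> ?A"
    have I3: "integrable (count_space ?B) (\<lambda>ys. \<bar>?hh ys\<bar> * ?C xs ys)"
      by (rule count_int_bound[OF hI, of _ ?K]) (use Cb[OF xs] in \<open>auto simp: abs_mult mult.commute intro: mult_left_mono\<close>)
    have "(\<integral>\<eta>. \<bar>?f2 xs \<eta>\<bar> \<partial>?mu) \<le> infsum (\<lambda>ys. \<integral>\<eta>. \<bar>?f1 xs ys \<eta>\<bar> \<partial>?mu) ?B"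
      by (rule BD1[OF xs])
    also have "\<dots> = (\<integral>ys. \<bar>?g xs\<bar> * (\<bar>?hh ys\<bar> * ?C xs ys) \<partial>count_space ?B)"
      unfolding ab1 infsum_real_eq_integral by (simp add: mult.assoc)
    also have "\<dots> = \<bar>?g xs\<bar> * (\<integral>ys. \<bar>?hh ys\<bar> * ?C xs ys \<partial>count_space ?B)" by simp
    also have "(\<integral>ys. \<bar>?hh ys\<bar> * ?C xs ys \<partial>count_space ?B) \<le> (\<integral>ys. ?K * \<bar>?hh ys\<bar> \<partial>count_space ?B)"
      by (rule integral_mono[OF I3]) (use hab Cb[OF xs] in \<open>auto simp: mult.commute intro: mult_left_mono\<close>)
    finally have "(\<integral>\<eta>. \<bar>?f2 xs \<eta>\<bar> \<partial>?mu) \<le> \<bar>?g xs\<bar> * (?K * (\<integral>ys. \<bar>?hh ys\<bar> \<partial>count_space ?B))"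
      by (simp add: mult_left_mono)
    moreover have "0 \<le> (\<integral>\<eta>. \<bar>?f2 xs \<eta>\<bar> \<partial>?mu)" by (rule integral_nonneg_AE) simp
    ultimately show "\<bar>\<integral>\<eta>. \<bar>?f2 xs \<eta>\<bar> \<partial>?mu\<bar> \<le> ?K * (\<integral>ys. \<bar>?hh ys\<bar> \<partial>count_space ?B) * \<bar>?g xs\<bar>"
      by (simp add: mult_ac)
  qed
  note SW2 = integral_infsum_swap[OF mu_prob countable_lists int2 summ2]
  have "(\<integral>\<eta>. pairing_tensor k l h G H N \<eta> \<partial>?mu) =
      1 / real N ^ ((k + l - h) * CARD('d)) * (\<integral>\<eta>. infsum (\<lambda>xs. ?f2 xs \<eta>) ?A \<partial>?mu)"
    by (simp add: pairing_tensor_def)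
  also have "(\<integral>\<eta>. infsum (\<lambda>xs. ?f2 xs \<eta>) ?A \<partial>?mu) = infsum (\<lambda>xs. \<integral>\<eta>. ?f2 xs \<eta> \<partial>?mu) ?A"
    by (rule SW2(2))
  also have "\<dots> = infsum (\<lambda>xs. infsum (\<lambda>ys. ?g xs * ?hh ys * ?C xs ys) ?B) ?A"
  proof (rule infsum_cong)
    fix xs assume xs: "xs \<in> ?A"
    have "(\<integral>\<eta>. ?f2 xs \<eta> \<partial>?mu) = infsum (\<lambda>ys. \<integral>\<eta>. ?f1 xs ys \<eta> \<partial>?mu) ?B" by (rule SW1(2)[OF xs])
    also have "\<dots> = infsum (\<lambda>ys. ?g xs * ?hh ys * ?C xs ys) ?B"
      using CM by simp
    finally show "(\<integral>\<eta>. ?f2 xs \<eta> \<partial>?mu) = infsum (\<lambda>ys. ?g xs * ?hh ys * ?C xs ys) ?B" .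
  qed
  also have "\<dots> = (\<integral>xs. (\<integral>ys. ?g xs * ?hh ys * ?C xs ys \<partial>count_space ?B) \<partial>count_space ?A)"
    by (simp add: infsum_real_eq_integral)
  finally show ?thesis .
qed



theorem lemma5p1:
  fixes k l \<alpha> N :: nat and \<sigma> :: int and \<theta> :: real
    and G H :: "(real ^ 'd::finite) list \<Rightarrow> real"
  assumes "1 \<le> l" and "l \<le> k" and "1 \<le> \<alpha>"
    and "schwartz k G" and "schwartz l H"
    and "\<sigma> \<in> {-1, 0, 1}" and "\<theta> \<in> Theta \<sigma>"
    and "1 \<le> N"
  shows "(\<integral>\<eta>. pairing k G N \<eta> \<partial>(mu \<sigma> \<alpha> \<theta> :: (int ^ 'd \<Rightarrow> nat) measure)) *
         (\<integral>\<eta>. pairing l H N \<eta> \<partial>(mu \<sigma> \<alpha> \<theta> :: (int ^ 'd \<Rightarrow> nat) measure)) =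
         (\<Sum>h = 0..l. \<theta> ^ h * (- of_int \<sigma>) ^ h / real N ^ (h * CARD('d)) *
            (\<integral>\<eta>. pairing_tensor k l h G H N \<eta> \<partial>(mu \<sigma> \<alpha> \<theta> :: (int ^ 'd \<Rightarrow> nat) measure)))"
proof -
  note l1 = assms(1) and lk = assms(2) and a = assms(3) and SG = assms(4) and SH = assms(5)
    and s = assms(6) and t = assms(7) and N = assms(8)
  have k: "1 \<le> k" using l1 lk by simp
  let ?d = "CARD('d)"
  let ?A = "{xs :: (int ^ 'd) list. length xs = k}"
  let ?B = "{ys :: (int ^ 'd) list. length ys = l}"
  let ?g = "\<lambda>xs. G (map (scale_site N) xs)"
  let ?hh = "\<lambda>ys. H (map (scale_site N) ys)"
  let ?M = "pprod (Fm \<sigma> \<alpha> \<theta>)"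
  let ?t = "- of_int \<sigma> * \<theta> :: real"
  let ?K = "2 ^ l * ((\<theta> * (real \<alpha> + real (k + l)) + 1) ^ (k + l) * real k ^ l)"
  let ?ck = "1 / real N ^ (k * ?d)" and ?cl = "1 / real N ^ (l * ?d)"
  have gI: "integrable (count_space ?A) ?g" by (rule schwartz_summable[OF N SG])
  have hI: "integrable (count_space ?B) ?hh" by (rule schwartz_summable[OF N SH])
  have Cb: "\<bar>Cc \<sigma> \<alpha> \<theta> h xs ys\<bar> \<le> ?K" if "xs \<in> ?A" "ys \<in> ?B" for h xs ys
    using Cc_bound[OF s t a, of xs h ys] that k by simp
  have LHS: "(\<integral>\<eta>. pairing k G N \<eta> \<partial>(mu \<sigma> \<alpha> \<theta> :: (int ^ 'd \<Rightarrow> nat) measure)) *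
         (\<integral>\<eta>. pairing l H N \<eta> \<partial>(mu \<sigma> \<alpha> \<theta> :: (int ^ 'd \<Rightarrow> nat) measure)) =
      ?ck * ?cl * (\<integral>xs. (\<integral>ys. ?g xs * ?M xs * (?hh ys * ?M ys) \<partial>count_space ?B) \<partial>count_space ?A)"
    unfolding E_pairing[OF s t a N SG] E_pairing[OF s t a N SH] by simp
  have RH: "\<theta> ^ h * (- of_int \<sigma>) ^ h / real N ^ (h * ?d) *
      (\<integral>\<eta>. pairing_tensor k l h G H N \<eta> \<partial>(mu \<sigma> \<alpha> \<theta> :: (int ^ 'd \<Rightarrow> nat) measure)) =
      ?ck * ?cl * (\<integral>xs. (\<integral>ys. ?t ^ h * (?g xs * ?hh ys * Cc \<sigma> \<alpha> \<theta> h xs ys) \<partial>count_space ?B) \<partial>count_space ?A)"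
    if h: "h \<in> {0..l}" for h
  proof -
    have e0: "h + (k + l - h) = k + l" using h lk by simp
    have e: "h * ?d + (k + l - h) * ?d = k * ?d + l * ?d" by (simp only: add_mult_distrib[symmetric] e0)
    have Np: "real N \<noteq> 0" using N by simp
    have "real N ^ (h * ?d) * real N ^ ((k + l - h) * ?d) = real N ^ (k * ?d) * real N ^ (l * ?d)"
      by (simp only: power_add[symmetric] e)
    moreover have pw: "\<theta> ^ h * (- of_int \<sigma>) ^ h = ?t ^ h"
      by (simp only: power_mult_distrib[symmetric]) (simp add: mult.commute)
    ultimately have c: "\<theta> ^ h * (- of_int \<sigma>) ^ h / real N ^ (h * ?d) * (1 / real N ^ ((k + l - h) * ?d)) = ?ck * ?cl * ?t ^ h"
      using Np unfolding pw by (simp add: field_simps)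
    have I: "(\<integral>xs. (\<integral>ys. ?t ^ h * (?g xs * ?hh ys * Cc \<sigma> \<alpha> \<theta> h xs ys) \<partial>count_space ?B) \<partial>count_space ?A)
        = ?t ^ h * (\<integral>xs. (\<integral>ys. ?g xs * ?hh ys * Cc \<sigma> \<alpha> \<theta> h xs ys \<partial>count_space ?B) \<partial>count_space ?A)"
      by (simp only: integral_mult_right_zero)
    show ?thesis
      unfolding E_tensor[OF s t a N SG SH k] I by (simp only: mult.assoc[symmetric] c)
  qed
  have "(\<Sum>h = 0..l. \<theta> ^ h * (- of_int \<sigma>) ^ h / real N ^ (h * ?d) *
            (\<integral>\<eta>. pairing_tensor k l h G H N \<eta> \<partial>(mu \<sigma> \<alpha> \<theta> :: (int ^ 'd \<Rightarrow> nat) measure))) =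
      ?ck * ?cl * (\<Sum>h = 0..l. (\<integral>xs. (\<integral>ys. ?t ^ h * (?g xs * ?hh ys * Cc \<sigma> \<alpha> \<theta> h xs ys) \<partial>count_space ?B) \<partial>count_space ?A))"
    unfolding sum_distrib_left by (rule sum.cong[OF refl]) (rule RH)
  also have "(\<Sum>h = 0..l. (\<integral>xs. (\<integral>ys. ?t ^ h * (?g xs * ?hh ys * Cc \<sigma> \<alpha> \<theta> h xs ys) \<partial>count_space ?B) \<partial>count_space ?A))
      = (\<integral>xs. (\<Sum>h = 0..l. (\<integral>ys. ?t ^ h * (?g xs * ?hh ys * Cc \<sigma> \<alpha> \<theta> h xs ys) \<partial>count_space ?B)) \<partial>count_space ?A)"
  proof (rule Bochner_Integration.integral_sum[symmetric])
    fix h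
    have "integrable (count_space ?A) (\<lambda>xs. ?t ^ h * (\<integral>ys. ?g xs * ?hh ys * Cc \<sigma> \<alpha> \<theta> h xs ys \<partial>count_space ?B))"
      using KER(2)[where F = "\<lambda>xs ys. Cc \<sigma> \<alpha> \<theta> h xs ys" and K = ?K, OF gI hI Cb] by simp
    then show "integrable (count_space ?A) (\<lambda>xs. \<integral>ys. ?t ^ h * (?g xs * ?hh ys * Cc \<sigma> \<alpha> \<theta> h xs ys) \<partial>count_space ?B)"
      by simp
  qed
  also have "\<dots> = (\<integral>xs. (\<integral>ys. (\<Sum>h = 0..l. ?t ^ h * (?g xs * ?hh ys * Cc \<sigma> \<alpha> \<theta> h xs ys)) \<partial>count_space ?B) \<partial>count_space ?A)"
  proof (rule Bochner_Integration.integral_cong[OF refl])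
    fix xs assume xs: "xs \<in> space (count_space ?A)"
    show "(\<Sum>h = 0..l. (\<integral>ys. ?t ^ h * (?g xs * ?hh ys * Cc \<sigma> \<alpha> \<theta> h xs ys) \<partial>count_space ?B)) =
        (\<integral>ys. (\<Sum>h = 0..l. ?t ^ h * (?g xs * ?hh ys * Cc \<sigma> \<alpha> \<theta> h xs ys)) \<partial>count_space ?B)"
    proof (rule Bochner_Integration.integral_sum[symmetric])
      fix h
      show "integrable (count_space ?B) (\<lambda>ys. ?t ^ h * (?g xs * ?hh ys * Cc \<sigma> \<alpha> \<theta> h xs ys))"
        using KER(1)[where F = "\<lambda>xs ys. Cc \<sigma> \<alpha> \<theta> h xs ys" and K = ?K, OF gI hI Cb] xs by simp
    qed
  qed
  also have "\<dots> = (\<integral>xs. (\<integral>ys. ?g xs * ?M xs * (?hh ys * ?M ys) \<partial>count_space ?B) \<partial>count_space ?A)"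
  proof (rule Bochner_Integration.integral_cong[OF refl])
    fix xs assume xs: "xs \<in> space (count_space ?A)"
    show "(\<integral>ys. (\<Sum>h = 0..l. ?t ^ h * (?g xs * ?hh ys * Cc \<sigma> \<alpha> \<theta> h xs ys)) \<partial>count_space ?B) =
        (\<integral>ys. ?g xs * ?M xs * (?hh ys * ?M ys) \<partial>count_space ?B)"
    proof (rule Bochner_Integration.integral_cong[OF refl])
      fix ys assume ys: "ys \<in> space (count_space ?B)"
      then have ly: "length ys = l" by simp
      have "(\<Sum>h = 0..l. ?t ^ h * (?g xs * ?hh ys * Cc \<sigma> \<alpha> \<theta> h xs ys)) =
          (?g xs * ?hh ys) * (\<Sum>h = 0..length ys. ?t ^ h * Cc \<sigma> \<alpha> \<theta> h xs ys)"
        by (simp add: ly sum_distrib_left mult_ac)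
      also have "\<dots> = ?g xs * ?M xs * (?hh ys * ?M ys)"
        unfolding comb_curly by (simp add: mult_ac)
      finally show "(\<Sum>h = 0..l. ?t ^ h * (?g xs * ?hh ys * Cc \<sigma> \<alpha> \<theta> h xs ys)) = ?g xs * ?M xs * (?hh ys * ?M ys)" .
    qed
  qed
  finally show ?thesis using LHS by simp
qed

end
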